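(* Let $\phi$ have the HTHS prior or the HTHS+ prior (defined in the context), and let $y\mid\phi\sim\mathcal{N}(\phi,1)$. Let $m(y)=\int \mathcal{N}(y\mid\phi,1)\,f(\phi)\,\mathrm{d}\phi$ be the marginal density of $y$, where $f$ is the prior density of $\phi$. Then there is a slowly varying function $L$ (i.e. $L(tx)/L(x)\to 1$ as $x\to\infty$ for every $t>0$) such that $$m(y)\asymp \frac{L(y^2)}{|y|}\quad\text{as } |y|\to\infty .$$ Consequently, $\frac{\mathrm{d}}{\mathrm{d}y}\log m(y)\asymp \frac{1}{|y|}$ as $|y|\to\infty$, up to the (more quickly vanishing) score $\frac{\mathrm{d}}{\mathrm{d}y}\log L(y^2)$ of the slowly varying function.
   Context: The HTHS prior on $\phi\in\mathbb{R}$: $\phi\mid\gamma\sim\mathcal{N}(0,1/\gamma)$, where $\gamma>0$ has the log-Cauchy density $\pi(\gamma)=\frac{1}{\gamma\left((\log\gamma)^2+\pi^2\right)}$, $\gamma\in(0,\infty)$. (Equivalently, $\gamma\mid p,\omega\sim\mathrm{Gamma}(p,\omega)$ with rate $\omega$, $\omega\mid p\sim\mathrm{Gamma}(1-p,1)$, $p\sim\mathrm{Uniform}(0,1)$.) The HTHS+ prior on $\phi$: $\phi\mid\gamma\sim\mathcal{N}(0,1/\gamma)$ where $\gamma$ has density $\pi(\gamma)=\frac{2}{\gamma\left((\log\gamma)^2+4\pi^2\right)}$, $\gamma\in(0,\infty)$. The notation $g(y)\asymp h(y)$ means asymptotic equivalence as $|y|\to\infty$. *)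

theory Defs
  imports "HOL-Probability.Probability" "HOL-Library.Landau_Symbols"
begin

text \<open>Log-Cauchy density of the precision gamma for the HTHS prior.\<close>
definition hths_gamma_density :: "real \<Rightarrow> real" where
  "hths_gamma_density g = 1 / (g * ((ln g)\<^sup>2 + pi\<^sup>2))"

definition hths_plus_gamma_density :: "real \<Rightarrow> real" where
  "hths_plus_gamma_density g = 2 / (g * ((ln g)\<^sup>2 + 4 * pi\<^sup>2))"

text \<open>Prior density of phi: scale mixture of N(0, 1/gamma) over the density p of gamma on (0,oo).
  normal_density mu sigma uses the standard deviation sigma.\<close>
definition scale_mixture_prior :: "(real \<Rightarrow> real) \<Rightarrow> real \<Rightarrow> real" where
  "scale_mixture_prior p phi =
     (LINT g:{0<..}|lborel. normal_density 0 (1 / sqrt g) phi * p g)"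

definition marginal_density :: "(real \<Rightarrow> real) \<Rightarrow> real \<Rightarrow> real" where
  "marginal_density f y = (LINT phi|lborel. normal_density phi 1 y * f phi)"

definition slowly_varying :: "(real \<Rightarrow> real) \<Rightarrow> bool" where
  "slowly_varying L \<longleftrightarrow> (\<forall>\<^sub>F x in at_top. L x > 0) \<and>
     (\<forall>t>0. ((\<lambda>x. L (t * x) / L x) \<longlongrightarrow> 1) at_top)"

end

theory Submission
  imports Defs "HOL-Real_Asymp.Real_Asymp"
begin


definition pd :: "real \<Rightarrow> real \<Rightarrow> real \<Rightarrow> real" where
  "pd c b g = c / (g * ((ln g)\<^sup>2 + b\<^sup>2))"

lemma pd_pos: "c > 0 \<Longrightarrow> b > 0 \<Longrightarrow> g > 0 \<Longrightarrow> pd c b g > 0"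
  unfolding pd_def by (intro divide_pos_pos mult_pos_pos) (auto simp: add_nonneg_pos)

lemma pd_integrable:
  assumes c: "c > 0" and b: "b > 0"
  shows "set_integrable lborel {0<..} (pd c b)"
proof -
  have "set_integrable lborel (einterval 0 \<infinity>) (pd c b)"
  proof (rule interval_integral_FTC_nonneg(1)[where F="\<lambda>g. (c/b) * arctan (ln g / b)"])
    show "(0::ereal) < \<infinity>" by simp
    fix x assume "0 < ereal x" "ereal x < \<infinity>"
    then have x: "x > 0" by simp
    show "((\<lambda>g. (c/b) * arctan (ln g / b)) has_real_derivative pd c b x) (at x)"
    proof -
      have "b * b * x + x * (ln x * ln x) > 0" using x b
        by (intro add_pos_nonneg) auto
      then show ?thesis
      using x b apply (auto intro!: derivative_eq_intros simp: pd_def) 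
        apply (simp add: field_simps power2_eq_square)
        apply (subst divide_eq_eq)
        apply (auto simp: algebra_simps)
        using mult_pos_pos[of "b*b" "b*(b*x) + x*(ln x*ln x)"]
        by (simp add: distrib_left mult.assoc)
    qed
    show "isCont (pd c b) x" using x b unfolding pd_def
      by (auto intro!: continuous_intros simp: add_pos_nonneg)
  next
    show "AE x in lborel. 0 < ereal x \<longrightarrow> ereal x < \<infinity> \<longrightarrow> 0 \<le> pd c b x"
      using pd_pos[OF c b] by (auto intro!: AE_I2 less_imp_le)
    have "((\<lambda>g. (c/b) * arctan (ln g / b)) \<longlongrightarrow> (c/b) * (-(pi/2))) (at_right 0)"
      using b by (intro tendsto_intros filterlim_compose[OF tendsto_arctan_at_bot]) real_asymp
    then show "(((\<lambda>g. (c/b) * arctan (ln g / b)) \<circ> real_of_ereal) \<longlongrightarrow> (c/b) * (-(pi/2))) (at_right 0)"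
      by (simp add: zero_ereal_def ereal_tendsto_simps)
    have "((\<lambda>g. (c/b) * arctan (ln g / b)) \<longlongrightarrow> (c/b) * (pi/2)) at_top"
      using b by (intro tendsto_intros filterlim_compose[OF tendsto_arctan_at_top]) real_asymp
    then show "(((\<lambda>g. (c/b) * arctan (ln g / b)) \<circ> real_of_ereal) \<longlongrightarrow> (c/b) * (pi/2)) (at_left \<infinity>)"
      by (simp add: ereal_tendsto_simps)
  qed
  then show ?thesis by (simp add: zero_ereal_def einterval_def greaterThan_def)
qed


definition uu :: "real \<Rightarrow> real" where "uu g = g / (1 + g)"
definition kern :: "real \<Rightarrow> real \<Rightarrow> real" where
  "kern y g = exp (-(y\<^sup>2 * uu g) / 2) * sqrt (uu g) / sqrt (2 * pi)"
definition Mf :: "real \<Rightarrow> real \<Rightarrow> real \<Rightarrow> real" where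
  "Mf c b y = (LINT g:{0<..}|lborel. kern y g * pd c b g)"

lemma nd_eq:
  assumes g: "g > 0"
  shows "normal_density 0 (sqrt (1 + 1 / g)) y = kern y g"
proof -
  have u: "uu g = 1 / (1 + 1/g)" using g unfolding uu_def by (simp add: field_simps)
  have up: "uu g > 0" using g unfolding uu_def by simp
  have s2: "(sqrt (1 + 1 / g))\<^sup>2 = 1 / uu g" using g by (simp add: u add_pos_pos)
  have e1: "1 / sqrt (2 * pi * (sqrt (1 + 1 / g))\<^sup>2) = sqrt (uu g) / sqrt (2*pi)"
    unfolding s2 using up by (simp add: real_sqrt_divide real_sqrt_mult)
  have e2: "-(y - 0)\<^sup>2 / (2 * (sqrt (1 + 1 / g))\<^sup>2) = -(y\<^sup>2 * uu g) / 2"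
    unfolding s2 using up by simp
  show ?thesis unfolding normal_density_def kern_def e1 e2 by simp
qed

lemma conv_eq:
  assumes g: "g > 0"
  shows "(\<integral>\<^sup>+\<phi>. ennreal (normal_density \<phi> 1 y * normal_density 0 (1 / sqrt g) \<phi>) \<partial>lborel) = ennreal (kern y g)"
proof -
  have "(\<integral>\<^sup>+\<phi>. ennreal (normal_density \<phi> 1 y * normal_density 0 (1 / sqrt g) \<phi>) \<partial>lborel)
      = (\<integral>\<^sup>+\<phi>. ennreal (normal_density 0 1 (y - \<phi>) * normal_density 0 (1 / sqrt g) \<phi>) \<partial>lborel)"
    by (intro nn_integral_cong) (simp add: normal_density_def power2_commute)
  also have "\<dots> = normal_density 0 (sqrt (1\<^sup>2 + (1 / sqrt g)\<^sup>2)) y"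
    using conv_normal_density_zero_mean[of 1 "1 / sqrt g"] g by (simp add: fun_eq_iff)
  also have "\<dots> = kern y g" using g nd_eq[OF g] by (simp add: power_divide)
  finally show ?thesis .
qed

lemma kern_nonneg: "g > 0 \<Longrightarrow> kern y g \<ge> 0"
  unfolding kern_def uu_def by simp

lemma kern_le1: "g > 0 \<Longrightarrow> kern y g \<le> 1"
proof -
  assume g: "g > 0"
  have u: "uu g \<le> 1" "uu g \<ge> 0" using g unfolding uu_def by auto
  have "exp (-(y\<^sup>2 * uu g) / 2) \<le> 1" using u by simp
  moreover have "sqrt (uu g) \<le> 1" using u by simp
  moreover have "sqrt (2*pi) \<ge> 1" using pi_gt3 by simp
  ultimately have "exp (-(y\<^sup>2 * uu g) / 2) * sqrt (uu g) \<le> sqrt (2*pi)"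
  proof -
    have "exp (-(y\<^sup>2 * uu g) / 2) * sqrt (uu g) \<le> 1"
      by (rule mult_le_one) (use u \<open>sqrt (uu g) \<le> 1\<close> in auto)
    then show ?thesis using \<open>sqrt (2*pi) \<ge> 1\<close> by linarith
  qed
  then show ?thesis unfolding kern_def by (simp add: divide_le_eq_1)
qed


lemma m1: "(\<lambda>g. indicator {0<..} g * pd c b g :: real) \<in> borel_measurable lborel"
  unfolding pd_def by measurable
lemma m2: "(\<lambda>(\<phi>,g). normal_density 0 (1 / sqrt g) \<phi>) \<in> borel_measurable (lborel \<Otimes>\<^sub>M lborel)"
  unfolding normal_density_def by measurable
lemma m3: "(\<lambda>\<phi>. normal_density \<phi> 1 y) \<in> borel_measurable lborel"
  unfolding normal_density_def by measurable

lemma mk: "(\<lambda>g. kern y g) \<in> borel_measurable lborel"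
  unfolding kern_def uu_def by measurable

lemma mh: "(\<lambda>x. indicator {0<..} (snd x) * (normal_density 0 (1 / sqrt (snd x)) (fst x) * pd c b (snd x)))
   \<in> borel_measurable (lborel \<Otimes>\<^sub>M lborel)"
proof -
  have b: "(\<lambda>x. indicator {0<..} (snd x) * pd c b (snd x) :: real) \<in> borel_measurable (lborel \<Otimes>\<^sub>M lborel)"
    by (rule measurable_compose[OF measurable_snd m1])
  have c: "(\<lambda>x. normal_density 0 (1 / sqrt (snd x)) (fst x)) \<in> borel_measurable (lborel \<Otimes>\<^sub>M lborel)"
    using m2 by (simp add: case_prod_beta')
  show ?thesis using borel_measurable_times[OF b c] by (simp add: ac_simps)
qed

lemma marg:
  assumes c: "c > 0" and b: "b > 0"
  shows "marginal_density (scale_mixture_prior (pd c b)) y = Mf c b y"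
proof -
  define h where "h \<phi> g = indicator {0<..} g * (normal_density 0 (1 / sqrt g) \<phi> * pd c b g)" for \<phi> g
  define J where "J \<phi> = (\<integral>\<^sup>+g. ennreal (h \<phi> g) \<partial>lborel)" for \<phi>
  have hnn: "h \<phi> g \<ge> 0" for \<phi> g
    using pd_pos[OF c b, of g] by (auto simp: h_def indicator_def normal_density_nonneg)
  have hp: "(\<lambda>x. h (fst x) (snd x)) \<in> borel_measurable (lborel \<Otimes>\<^sub>M lborel)"
    using mh unfolding h_def .
  have hm: "h \<phi> \<in> borel_measurable lborel" for \<phi>
    using measurable_compose[OF measurable_Pair1'[of \<phi> lborel lborel] hp] by simp
  have f_eq: "scale_mixture_prior (pd c b) \<phi> = enn2real (J \<phi>)" for \<phi>
  proof -
    have "(\<lambda>g. indicator {0<..} g *\<^sub>R (normal_density 0 (1 / sqrt g) \<phi> * pd c b g)) = h \<phi>"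
      by (simp add: h_def fun_eq_iff)
    then show ?thesis
      unfolding scale_mixture_prior_def set_lebesgue_integral_def J_def
      using hnn hm by (simp add: integral_eq_nn_integral)
  qed
  have Jm: "J \<in> borel_measurable lborel"
  proof -
    have "(\<lambda>x. ennreal (h (fst x) (snd x))) \<in> borel_measurable (lborel \<Otimes>\<^sub>M lborel)"
      by (rule measurable_compose[OF hp measurable_ennreal])
    then have "case_prod (\<lambda>\<phi> g. ennreal (h \<phi> g)) \<in> borel_measurable (lborel \<Otimes>\<^sub>M lborel)"
      by (simp add: case_prod_beta')
    from lborel.borel_measurable_nn_integral[OF this] show ?thesis unfolding J_def by simp
  qed
  have nm: "(\<lambda>x. ennreal (normal_density (fst x) 1 y)) \<in> borel_measurable (lborel \<Otimes>\<^sub>M lborel)"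
    by (rule measurable_compose[OF measurable_compose[OF measurable_fst m3] measurable_ennreal])
  have jointm: "case_prod (\<lambda>\<phi> g. ennreal (normal_density \<phi> 1 y) * ennreal (h \<phi> g)) \<in> borel_measurable (lborel \<Otimes>\<^sub>M lborel)"
  proof -
    have "(\<lambda>x. ennreal (normal_density (fst x) 1 y) * ennreal (h (fst x) (snd x))) \<in> borel_measurable (lborel \<Otimes>\<^sub>M lborel)"
      by (rule borel_measurable_times_ennreal[OF nm measurable_compose[OF hp measurable_ennreal]])
    then show ?thesis by (simp add: case_prod_beta')
  qed
  define T where "T = (\<integral>\<^sup>+g. ennreal (indicator {0<..} g * (kern y g * pd c b g)) \<partial>lborel)"
  have swap: "(\<integral>\<^sup>+\<phi>. ennreal (normal_density \<phi> 1 y) * J \<phi> \<partial>lborel) = T"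
  proof -
    have "(\<integral>\<^sup>+\<phi>. ennreal (normal_density \<phi> 1 y) * J \<phi> \<partial>lborel)
        = (\<integral>\<^sup>+\<phi>. (\<integral>\<^sup>+g. ennreal (normal_density \<phi> 1 y) * ennreal (h \<phi> g) \<partial>lborel) \<partial>lborel)"
      unfolding J_def using hm by (subst nn_integral_cmult) auto
    also have "\<dots> = (\<integral>\<^sup>+g. (\<integral>\<^sup>+\<phi>. ennreal (normal_density \<phi> 1 y) * ennreal (h \<phi> g) \<partial>lborel) \<partial>lborel)"
      using lborel_pair.Fubini'[OF jointm] by simp
    also have "\<dots> = T" unfolding T_def
    proof (intro nn_integral_cong)
      fix g :: real
      show "(\<integral>\<^sup>+\<phi>. ennreal (normal_density \<phi> 1 y) * ennreal (h \<phi> g) \<partial>lborel)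
          = ennreal (indicator {0<..} g * (kern y g * pd c b g))"
      proof (cases "g > 0")
        case True
        have "(\<integral>\<^sup>+\<phi>. ennreal (normal_density \<phi> 1 y) * ennreal (h \<phi> g) \<partial>lborel)
           = (\<integral>\<^sup>+\<phi>. ennreal (pd c b g) * ennreal (normal_density \<phi> 1 y * normal_density 0 (1 / sqrt g) \<phi>) \<partial>lborel)"
          using True pd_pos[OF c b True]
          by (intro nn_integral_cong) (simp add: h_def normal_density_nonneg mult_ac flip: ennreal_mult)
        also have "\<dots> = ennreal (pd c b g) * ennreal (kern y g)"
          apply (subst nn_integral_cmult)
          subgoal unfolding normal_density_def by measurable
          using conv_eq[OF True] by simp
        also have "\<dots> = ennreal (indicator {0<..} g * (kern y g * pd c b g))"
          using True pd_pos[OF c b True] kern_nonneg[OF True] by (simp add: ennreal_mult ac_simps)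
        finally show ?thesis .
      next
        case False
        then show ?thesis by (simp add: h_def)
      qed
    qed
    finally show ?thesis .
  qed
  have Tfin: "T < \<infinity>"
  proof -
    have "T \<le> (\<integral>\<^sup>+g. ennreal (norm (indicator {0<..} g *\<^sub>R pd c b g)) \<partial>lborel)"
      unfolding T_def
      using pd_pos[OF c b] kern_le1 kern_nonneg
      by (intro nn_integral_mono) (auto simp: indicator_def intro!: ennreal_leI mult_le_one
           simp add: mult_le_cancel_right1 less_imp_le)
    also have "\<dots> < \<infinity>"
      using pd_integrable[OF c b] unfolding set_integrable_def integrable_iff_bounded by simp
    finally show ?thesis .
  qed
  have AEJ: "AE \<phi> in lborel. J \<phi> \<noteq> \<infinity>"
  proof -
    have "AE \<phi> in lborel. ennreal (normal_density \<phi> 1 y) * J \<phi> \<noteq> \<infinity>"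
      using Tfin swap Jm m3 by (intro nn_integral_PInf_AE) auto
    then show ?thesis
    proof eventually_elim
      case (elim \<phi>)
      have "normal_density \<phi> 1 y > 0" by (rule normal_density_pos) simp
      with elim show ?case by (auto simp: ennreal_mult_eq_top_iff)
    qed
  qed
  have "marginal_density (scale_mixture_prior (pd c b)) y
      = (LINT \<phi>|lborel. normal_density \<phi> 1 y * enn2real (J \<phi>))"
    unfolding marginal_density_def f_eq ..
  also have "\<dots> = enn2real (\<integral>\<^sup>+\<phi>. ennreal (normal_density \<phi> 1 y * enn2real (J \<phi>)) \<partial>lborel)"
    using Jm m3 by (subst integral_eq_nn_integral) (auto simp: normal_density_nonneg)
  also have "\<dots> = enn2real (\<integral>\<^sup>+\<phi>. ennreal (normal_density \<phi> 1 y) * J \<phi> \<partial>lborel)"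
    using AEJ by (intro arg_cong[where f=enn2real] nn_integral_cong_AE)
      (auto simp: ennreal_mult normal_density_nonneg ennreal_enn2real_if)
  also have "\<dots> = enn2real T" using swap by simp
  also have "\<dots> = Mf c b y"
    unfolding Mf_def set_lebesgue_integral_def T_def
    using pd_pos[OF c b] kern_nonneg
  proof (subst integral_eq_nn_integral)
    have "(\<lambda>g. kern y g * (indicator {0<..} g * pd c b g)) \<in> borel_measurable lborel"
      by (rule borel_measurable_times[OF mk m1])
    moreover have "(\<lambda>g. indicat_real {0<..} g *\<^sub>R (kern y g * pd c b g)) = (\<lambda>g. kern y g * (indicator {0<..} g * pd c b g))"
      by (simp add: fun_eq_iff)
    ultimately show "(\<lambda>g. indicat_real {0<..} g *\<^sub>R (kern y g * pd c b g)) \<in> borel_measurable lborel"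
      by simp
    show "AE x in lborel. 0 \<le> indicat_real {0<..} x *\<^sub>R (kern y x * pd c b x)"
      using pd_pos[OF c b] kern_nonneg by (auto simp: indicator_def less_imp_le intro!: AE_I2)
  qed simp
  finally show ?thesis .
qed


lemma has_deriv_set_integral:
  fixes f f' :: "real \<Rightarrow> real \<Rightarrow> real" and w :: "real \<Rightarrow> real" and S :: "real set"
  assumes int: "\<And>x. set_integrable lborel S (f x)"
  and der: "\<And>x t. t \<in> S \<Longrightarrow> ((\<lambda>x. f x t) has_real_derivative f' x t) (at x)"
  and meas: "\<And>x. set_borel_measurable lborel S (f' x)"
  and w: "set_integrable lborel S w"
  and bnd: "\<And>x t. t \<in> S \<Longrightarrow> \<bar>f' x t\<bar> \<le> w t"
  shows "((\<lambda>x. LINT t:S|lborel. f x t) has_real_derivative (LINT t:S|lborel. f' x t)) (at x)"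
proof -
  let ?F = "\<lambda>x. LINT t:S|lborel. f x t"
  have "((\<lambda>h. (?F (x + h) - ?F x) / h) \<longlongrightarrow> (LINT t:S|lborel. f' x t)) (at 0)"
    unfolding tendsto_at_iff_sequentially
  proof (intro allI impI)
    fix X :: "nat \<Rightarrow> real"
    assume X0: "\<forall>i. X i \<in> UNIV - {0}" and Xl: "X \<longlonglongrightarrow> 0"
    define s where "s i t = indicator S t * ((f (x + X i) t - f x t) / X i)" for i t
    have eq: "(?F (x + X i) - ?F x) / X i = integral\<^sup>L lborel (s i)" for i
    proof -
      have "(?F (x + X i) - ?F x) / X i = (LINT t:S|lborel. (f (x + X i) t - f x t) / X i)"
        using int by (simp add: set_integral_diff set_integral_divide_zero)
      then show ?thesis unfolding set_lebesgue_integral_def s_def by simp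
    qed
    have "(\<lambda>i. integral\<^sup>L lborel (s i)) \<longlonglongrightarrow> integral\<^sup>L lborel (\<lambda>t. indicator S t * f' x t)"
    proof (rule integral_dominated_convergence[where w="\<lambda>t. indicator S t * w t"])
      show "(\<lambda>t. indicator S t * f' x t) \<in> borel_measurable lborel"
        using meas[of x] unfolding set_borel_measurable_def by simp
      show "s i \<in> borel_measurable lborel" for i
      proof -
        have "(\<lambda>t. indicator S t * f (x + X i) t) \<in> borel_measurable lborel"
             "(\<lambda>t. indicator S t * f x t) \<in> borel_measurable lborel"
          using int[of "x + X i"] int[of x] unfolding set_integrable_def
          by (auto dest: borel_measurable_integrable)
        then have "(\<lambda>t. (indicator S t * f (x + X i) t - indicator S t * f x t) / X i) \<in> borel_measurable lborel"
          by measurable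
        then show ?thesis unfolding s_def by (simp add: right_diff_distrib)
      qed
      show "integrable lborel (\<lambda>t. indicator S t * w t)"
        using w unfolding set_integrable_def by simp
      show "AE t in lborel. (\<lambda>i. s i t) \<longlonglongrightarrow> indicator S t * f' x t"
      proof (intro AE_I2)
        fix t
        show "(\<lambda>i. s i t) \<longlonglongrightarrow> indicator S t * f' x t"
        proof (cases "t \<in> S")
          case True
          have "((\<lambda>h. (f (x + h) t - f x t) / h) \<longlongrightarrow> f' x t) (at 0)"
            using der[OF True, of x] unfolding DERIV_def .
          moreover have "filterlim X (at 0) sequentially"
            using X0 Xl by (intro filterlim_atI) auto
          ultimately have "(\<lambda>i. (f (x + X i) t - f x t) / X i) \<longlonglongrightarrow> f' x t"
            by (rule filterlim_compose)
          then show ?thesis using True unfolding s_def by simp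
        next
          case False
          then show ?thesis unfolding s_def by simp
        qed
      qed
      show "AE t in lborel. norm (s i t) \<le> indicator S t * w t" for i
      proof (intro AE_I2)
        fix t
        show "norm (s i t) \<le> indicator S t * w t"
        proof (cases "t \<in> S")
          case True
          have "norm ((\<lambda>z. f z t) (x + X i) - (\<lambda>z. f z t) x) \<le> w t * norm ((x + X i) - x)"
            by (rule field_differentiable_bound[where S=UNIV and f'="\<lambda>z. f' z t"])
               (use der[OF True] bnd[OF True] in auto)
          then have "\<bar>f (x + X i) t - f x t\<bar> \<le> w t * \<bar>X i\<bar>" by simp
          moreover have "\<bar>X i\<bar> > 0" using X0 by auto
          ultimately show ?thesis using True unfolding s_def
            by (simp add: abs_divide divide_le_eq)
        next
          case False
          then show ?thesis unfolding s_def by simp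
        qed
      qed
    qed
    then show "((\<lambda>h. (?F (x + h) - ?F x) / h) \<circ> X) \<longlonglongrightarrow> (LINT t:S|lborel. f' x t)"
    proof -
      have "(\<lambda>i. (?F (x + X i) - ?F x) / X i) = (\<lambda>i. integral\<^sup>L lborel (s i))"
        using eq by auto
      with \<open>(\<lambda>i. integral\<^sup>L lborel (s i)) \<longlonglongrightarrow> _\<close> show ?thesis
        unfolding o_def set_lebesgue_integral_def by simp
    qed
  qed
  then show ?thesis unfolding DERIV_def .
qed


definition qq :: "real \<Rightarrow> real \<Rightarrow> real \<Rightarrow> real" where "qq c b g = c / ((ln g)\<^sup>2 + b\<^sup>2)"
definition psi :: "real \<Rightarrow> real \<Rightarrow> real \<Rightarrow> real" where "psi c b g = (1 + g) * qq c b g"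
definition dpsi :: "real \<Rightarrow> real \<Rightarrow> real \<Rightarrow> real" where
  "dpsi c b g = qq c b g - (1 + g) * (2 * c * ln g / (g * ((ln g)\<^sup>2 + b\<^sup>2)\<^sup>2))"
definition Phi :: "real \<Rightarrow> real \<Rightarrow> real" where "Phi a g = sqrt (uu g) * exp (- a * uu g)"
definition dPhi :: "real \<Rightarrow> real \<Rightarrow> real" where
  "dPhi a g = (1 / (2 * sqrt (uu g)) - a * sqrt (uu g)) * exp (- a * uu g) / (1 + g)\<^sup>2"
definition Aa :: "real \<Rightarrow> real \<Rightarrow> real \<Rightarrow> real \<Rightarrow> real" where "Aa c b a g = Phi a g * pd c b g"
definition Bb :: "real \<Rightarrow> real \<Rightarrow> real \<Rightarrow> real \<Rightarrow> real" where "Bb c b a g = 2 * a * uu g * Phi a g * pd c b g"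

lemma uu_pos: "g > 0 \<Longrightarrow> uu g > 0" unfolding uu_def by simp
lemma uu_less1: "g > 0 \<Longrightarrow> uu g < 1" unfolding uu_def by simp
lemma uu_le: "g > 0 \<Longrightarrow> uu g \<le> g" unfolding uu_def by (simp add: field_simps)
lemma uu_ge: "g > 0 \<Longrightarrow> g \<le> 1 \<Longrightarrow> uu g \<ge> g / 2" unfolding uu_def by (simp add: field_simps)
lemma uu_ge1: "g \<ge> 1 \<Longrightarrow> uu g \<ge> 1 / 2" unfolding uu_def by (simp add: field_simps)

lemma qq_pos: "b > 0 \<Longrightarrow> c > 0 \<Longrightarrow> qq c b g > 0"
  unfolding qq_def by (simp add: add_nonneg_pos)

lemma pd_qq: "pd c b g = qq c b g / g"
  unfolding pd_def qq_def by simp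

lemma uu_deriv: "g > 0 \<Longrightarrow> (uu has_real_derivative 1 / (1 + g)\<^sup>2) (at g)"
  unfolding uu_def
  by (auto intro!: derivative_eq_intros simp: power2_eq_square field_simps)

lemma alg: "inverse s / 2 * w * e + e * (- a * w) * s = (1 / (2 * s) - a * s) * e * w" for s w e a :: real
    by (cases "s = 0") (simp_all add: field_simps)

lemma Phi_deriv:
  assumes g: "g > 0"
  shows "((\<lambda>g. Phi a g) has_real_derivative dPhi a g) (at g)"
proof -
  have u: "uu g > 0" using uu_pos[OF g] .
  have d1: "((\<lambda>g. sqrt (uu g)) has_real_derivative (inverse (sqrt (uu g)) / 2) * (1 / (1 + g)\<^sup>2)) (at g)"
    by (rule DERIV_chain2[OF DERIV_real_sqrt[OF u] uu_deriv[OF g]])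
  have d2: "((\<lambda>g. exp (- a * uu g)) has_real_derivative exp (- a * uu g) * (- a * (1 / (1 + g)\<^sup>2))) (at g)"
    by (rule DERIV_chain2[OF DERIV_exp DERIV_cmult[OF uu_deriv[OF g]]])
  have "((\<lambda>g. sqrt (uu g) * exp (- a * uu g)) has_real_derivative
     (inverse (sqrt (uu g)) / 2) * (1 / (1 + g)\<^sup>2) * exp (- a * uu g) + exp (- a * uu g) * (- a * (1 / (1 + g)\<^sup>2)) * sqrt (uu g)) (at g)"
    by (rule DERIV_mult[OF d1 d2])
  moreover have "(inverse (sqrt (uu g)) / 2) * (1 / (1 + g)\<^sup>2) * exp (- a * uu g) + exp (- a * uu g) * (- a * (1 / (1 + g)\<^sup>2)) * sqrt (uu g)
     = dPhi a g"
    unfolding dPhi_def alg by simp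
  ultimately show ?thesis unfolding Phi_def by simp
qed

lemma alg2: "P > 0 \<Longrightarrow> g > 0 \<Longrightarrow> (c*P - (1+g)*c*(2*L)/g)/(P*P) = c/P - (1+g)*(2*c*L)/(g*P\<^sup>2)"
  for P g c L :: real
  by (simp add: field_simps power2_eq_square)

lemma psi_deriv:
  assumes g: "g > 0" and b: "b > 0"
  shows "(psi c b has_real_derivative dpsi c b g) (at g)"
proof -
  have p: "(ln g)\<^sup>2 + b\<^sup>2 > 0" using b by (simp add: add_nonneg_pos)
  show ?thesis unfolding psi_def qq_def dpsi_def
    using g p apply (auto intro!: derivative_eq_intros)
    apply (rule alg2) by auto
qed

lemma alg3:
  fixes s g e q a :: real
  assumes s: "s > 0" and g: "g > 0" and sg: "s\<^sup>2 = g / (1 + g)"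
  shows "2 * ((1 / (2 * s) - a * s) * e / (1 + g)\<^sup>2) * ((1 + g) * q) = s * e * (q / g) - 2 * a * s\<^sup>2 * (s * e) * (q / g)"
proof -
  have g1: "1 + g > 0" using g by simp
  have h: "s / g = 1 / (s * (1 + g))"
  proof -
    have "g = s\<^sup>2 * (1 + g)" using sg g1 by (simp add: field_simps)
    then have "s / g = s / (s\<^sup>2 * (1 + g))" by simp
    also have "\<dots> = s / (s * (s * (1 + g)))" by (simp add: power2_eq_square mult.assoc)
    also have "\<dots> = 1 / (s * (1 + g))" using s by simp
    finally show ?thesis .
  qed
  have "s * e * (q / g) - 2 * a * s\<^sup>2 * (s * e) * (q / g) = (1 - 2 * a * s\<^sup>2) * e * q * (s / g)"
    by (simp add: algebra_simps)
  also have "\<dots> = (1 - 2 * a * s\<^sup>2) * e * q / (s * (1 + g))" unfolding h by simp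
  also have "\<dots> = ((1 / (2 * s) - a * s) * 2) * e * q / (1 + g)"
  proof -
    have "(1 / (2 * s) - a * s) * 2 = (1 - 2 * a * s\<^sup>2) / s"
      using s by (simp add: field_simps power2_eq_square)
    then show ?thesis by (simp add: field_simps)
  qed
  also have "\<dots> = 2 * ((1 / (2 * s) - a * s) * e / (1 + g)\<^sup>2) * ((1 + g) * q)"
  proof -
    have "X * 2 * e * q / (1 + g) = 2 * (X * e / (1 + g)\<^sup>2) * ((1 + g) * q)" for X
    proof -
      have "1 + (g * g + g * 2) = (1 + g) * (1 + g)" by (simp add: algebra_simps)
      then have nz: "1 + (g * g + g * 2) \<noteq> 0" using g1 by simp
      show ?thesis using g1 nz by (simp add: field_simps power2_eq_square)
    qed
    from this show ?thesis .
  qed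
  finally show ?thesis by simp
qed

lemma key_identity:
  assumes g: "g > 0"
  shows "2 * dPhi a g * psi c b g = Aa c b a g - Bb c b a g"
proof -
  have "2 * dPhi a g * psi c b g = sqrt (uu g) * exp (- a * uu g) * (qq c b g / g) - 2 * a * (sqrt (uu g))\<^sup>2 * (sqrt (uu g) * exp (- a * uu g)) * (qq c b g / g)"
    unfolding dPhi_def psi_def
    by (rule alg3) (use g uu_pos[OF g] in \<open>auto simp: uu_def\<close>)
  also have "\<dots> = Aa c b a g - Bb c b a g"
    unfolding Aa_def Bb_def Phi_def pd_qq using uu_pos[OF g] by simp
  finally show ?thesis .
qed


lemma sbm: "f \<in> borel_measurable lborel \<Longrightarrow> S \<in> sets lborel \<Longrightarrow> set_borel_measurable lborel S (f::real\<Rightarrow>real)"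
  unfolding set_borel_measurable_def
  using borel_measurable_times[OF borel_measurable_indicator[of S lborel], of f] by simp

lemma mA: "(\<lambda>g. Aa c b a g) \<in> borel_measurable lborel"
  unfolding Aa_def Phi_def pd_def uu_def by measurable
lemma mB: "(\<lambda>g. Bb c b a g) \<in> borel_measurable lborel"
  unfolding Bb_def Phi_def pd_def uu_def by measurable
lemma mPd: "(\<lambda>g. Phi a g * dpsi c b g) \<in> borel_measurable lborel"
  unfolding Phi_def dpsi_def qq_def uu_def by measurable
lemma mpd: "(\<lambda>g. pd c b g) \<in> borel_measurable lborel"
  unfolding pd_def by measurable

lemma Phi_nonneg: "g > 0 \<Longrightarrow> Phi a g \<ge> 0"
  unfolding Phi_def using uu_pos[of g] by simp

lemma Phi_le_exp: "g > 0 \<Longrightarrow> Phi a g \<le> exp (- a * uu g)"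
proof -
  assume g: "g > 0"
  have "sqrt (uu g) \<le> 1" using uu_less1[OF g] uu_pos[OF g] by simp
  then show ?thesis unfolding Phi_def
    using mult_right_mono[of "sqrt (uu g)" 1 "exp (- a * uu g)"] by simp
qed

lemma Phi_le1: "g > 0 \<Longrightarrow> a \<ge> 0 \<Longrightarrow> Phi a g \<le> 1"
proof -
  assume g: "g > 0" and a: "a \<ge> 0"
  have "exp (- a * uu g) \<le> 1" using a uu_pos[OF g] by (simp add: mult_nonneg_nonneg)
  then show ?thesis using Phi_le_exp[OF g, of a] by linarith
qed

lemma Phi_le_delta:
  assumes g: "g > 0" "g \<le> 1" "g \<ge> d" and a: "a \<ge> 0"
  shows "Phi a g \<le> exp (- a * d / 2)"
proof -
  have "uu g \<ge> d / 2" using uu_ge[of g] g by auto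
  then have "- a * uu g \<le> - a * d / 2" using mult_left_mono[OF _ a, of d "2*uu g"] by (simp add: algebra_simps)
  then show ?thesis using Phi_le_exp[of g a] g by (meson exp_le_cancel_iff order_trans)
qed

lemma Phi_le_ge1:
  assumes g: "g \<ge> 1" and a: "a \<ge> 0"
  shows "Phi a g \<le> exp (- a / 2)"
proof -
  have "uu g \<ge> 1 / 2" using uu_ge1[OF g] .
  then have "- a * uu g \<le> - a / 2" using mult_left_mono[OF _ a, of 1 "2*uu g"] by (simp add: algebra_simps)
  then show ?thesis using Phi_le_exp[of g a] g by (meson exp_le_cancel_iff order_trans less_le_trans zero_less_one)
qed

context
  fixes c b :: real
  assumes c: "c > 0" and b: "b > 0"
begin

lemma pd_int_sub: "S \<subseteq> {0<..} \<Longrightarrow> S \<in> sets lborel \<Longrightarrow> set_integrable lborel S (pd c b)"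
  using set_integrable_subset[OF pd_integrable[OF c b]] by blast

lemma Aa_nonneg: "g > 0 \<Longrightarrow> Aa c b a g \<ge> 0"
  unfolding Aa_def using Phi_nonneg[of g a] pd_pos[OF c b, of g] by simp

lemma Aa_int: "a \<ge> 0 \<Longrightarrow> S \<subseteq> {0<..} \<Longrightarrow> S \<in> sets lborel \<Longrightarrow> set_integrable lborel S (Aa c b a)"
proof -
  assume a: "a \<ge> 0" and S: "S \<subseteq> {0<..}" "S \<in> sets lborel"
  show ?thesis
  proof (rule set_integrable_bound[OF pd_int_sub[OF S]])
    show "set_borel_measurable lborel S (Aa c b a)" using sbm[OF mA S(2)] .
    show "AE x in lborel. x \<in> S \<longrightarrow> norm (Aa c b a x) \<le> norm (pd c b x)"
    proof (rule AE_I2, intro impI)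
      fix x assume "x \<in> S"
      then have x: "x > 0" using S by auto
      show "norm (Aa c b a x) \<le> norm (pd c b x)"
        using Phi_le1[OF x a] Phi_nonneg[OF x, of a] pd_pos[OF c b x] unfolding Aa_def
        by (simp add: abs_mult mult_left_le_one_le)
    qed
  qed
qed

lemma Bb_int: "a \<ge> 0 \<Longrightarrow> S \<subseteq> {0<..} \<Longrightarrow> S \<in> sets lborel \<Longrightarrow> set_integrable lborel S (Bb c b a)"
proof -
  assume a: "a \<ge> 0" and S: "S \<subseteq> {0<..}" "S \<in> sets lborel"
  have i2: "set_integrable lborel S (\<lambda>g. (2 * a) * pd c b g)"
    using pd_int_sub[OF S] by simp
  show ?thesis
  proof (rule set_integrable_bound[OF i2])
    show "set_borel_measurable lborel S (Bb c b a)" using sbm[OF mB S(2)] .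
    show "AE x in lborel. x \<in> S \<longrightarrow> norm (Bb c b a x) \<le> norm (2 * a * pd c b x)"
    proof (rule AE_I2, intro impI)
      fix x assume "x \<in> S"
      then have x: "x > 0" using S by auto
      have "uu x * Phi a x \<le> 1"
        using Phi_le1[OF x a] Phi_nonneg[OF x, of a] uu_less1[OF x] uu_pos[OF x]
        by (simp add: mult_le_one)
      moreover have "uu x * Phi a x \<ge> 0" using Phi_nonneg[OF x, of a] uu_pos[OF x] by simp
      ultimately have "uu x * Phi a x * pd c b x \<le> pd c b x"
        using pd_pos[OF c b x] by (intro mult_left_le_one_le) auto
      then have "2 * a * (uu x * Phi a x * pd c b x) \<le> 2 * a * pd c b x"
        using a by (intro mult_left_mono) auto
      moreover have "Bb c b a x = 2 * a * (uu x * Phi a x * pd c b x)" unfolding Bb_def by simp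
      moreover have "Bb c b a x \<ge> 0" unfolding Bb_def
        using a Phi_nonneg[OF x, of a] uu_pos[OF x] pd_pos[OF c b x] by simp
      ultimately show "norm (Bb c b a x) \<le> norm (2 * a * pd c b x)"
        using pd_pos[OF c b x] a by simp
    qed
  qed
qed

end


context
  fixes c b :: real
  assumes c: "c > 0" and b: "b > 0"
begin

lemma Pb: "(ln g)\<^sup>2 + b\<^sup>2 > 0" using b by (simp add: add_nonneg_pos)

lemma dpsi_ratio:
  assumes g: "g > 0"
  shows "dpsi c b g = (g - (1 + g) * 2 * ln g / ((ln g)\<^sup>2 + b\<^sup>2)) * pd c b g"
proof -
  have P: "(ln g)\<^sup>2 + b\<^sup>2 > 0" by (rule Pb)
  have alg: "c / P - (1 + g) * (2 * c * L / (g * P\<^sup>2)) = (g - (1 + g) * 2 * L / P) * (c / (g * P))"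
    if "P > 0" for P L :: real
    using that g by (simp add: field_simps power2_eq_square)
  show ?thesis unfolding dpsi_def qq_def pd_def by (rule alg[OF P])
qed

lemma dpsi_small:
  assumes e: "e > 0"
  shows "\<exists>d. 0 < d \<and> d < 1 \<and> (\<forall>g. 0 < g \<and> g < d \<longrightarrow> \<bar>dpsi c b g\<bar> \<le> e * pd c b g)"
proof -
  have "((\<lambda>g::real. \<bar>g - (1 + g) * 2 * ln g / ((ln g)\<^sup>2 + b\<^sup>2)\<bar>) \<longlongrightarrow> 0) (at_right 0)"
    using b by real_asymp
  then have "eventually (\<lambda>g. \<bar>g - (1 + g) * 2 * ln g / ((ln g)\<^sup>2 + b\<^sup>2)\<bar> < e) (at_right 0)"
    using e by (rule order_tendstoD(2))
  then obtain d0 where d0: "d0 > 0" "\<And>g. g > 0 \<Longrightarrow> g < d0 \<Longrightarrow> \<bar>g - (1 + g) * 2 * ln g / ((ln g)\<^sup>2 + b\<^sup>2)\<bar> < e"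
    unfolding eventually_at_right_field by auto
  define d where "d = min d0 (1/2)"
  show ?thesis
  proof (intro exI[of _ d] conjI allI impI)
    show "0 < d" "d < 1" using d0 by (auto simp: d_def)
    fix g assume g: "0 < g \<and> g < d"
    then have "\<bar>g - (1 + g) * 2 * ln g / ((ln g)\<^sup>2 + b\<^sup>2)\<bar> \<le> e" using d0(2)[of g] by (auto simp: d_def)
    then have "\<bar>g - (1 + g) * 2 * ln g / ((ln g)\<^sup>2 + b\<^sup>2)\<bar> * pd c b g \<le> e * pd c b g"
      using pd_pos[OF c b, of g] g by (intro mult_right_mono) auto
    then show "\<bar>dpsi c b g\<bar> \<le> e * pd c b g"
      using dpsi_ratio[of g] g pd_pos[OF c b, of g] by (simp add: abs_mult)
  qed
qed

lemma dpsi_cont: "continuous_on {d..1} (dpsi c b)" if "d > 0"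
proof (rule continuous_at_imp_continuous_on, rule ballI)
  fix x assume "x \<in> {d..1}"
  then have x: "x > 0" using that by auto
  have P: "(ln x)\<^sup>2 + b\<^sup>2 \<noteq> 0" using Pb[of x] by linarith
  have Q: "x * ((ln x)\<^sup>2 + b\<^sup>2)\<^sup>2 \<noteq> 0" using x P by simp
  show "isCont (dpsi c b) x" unfolding dpsi_def qq_def
    using x P Q by (intro continuous_intros) auto
qed

lemma dpsi_bounded:
  assumes d: "d > 0"
  shows "\<exists>K\<ge>0. \<forall>g\<in>{d..1}. \<bar>dpsi c b g\<bar> \<le> K"
proof -
  have "compact (dpsi c b ` {d..1})"
    by (rule compact_continuous_image[OF dpsi_cont[OF d] compact_Icc])
  then obtain K where K: "\<forall>x\<in>dpsi c b ` {d..1}. norm x \<le> K"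
    using compact_imp_bounded bounded_iff by metis
  show ?thesis
    by (rule exI[of _ "max K 0"]) (use K in auto)
qed

lemma Pd_bound:
  assumes e: "e > 0"
  shows "\<exists>d K. 0 < d \<and> d < 1 \<and> K \<ge> 0 \<and> (\<forall>a g. a \<ge> 0 \<longrightarrow> 0 < g \<longrightarrow> g < 1 \<longrightarrow>
     \<bar>Phi a g * dpsi c b g\<bar> \<le> e * Aa c b a g + K * exp (- a * d / 2))"
proof -
  obtain d where d: "0 < d" "d < 1" "\<And>g. 0 < g \<Longrightarrow> g < d \<Longrightarrow> \<bar>dpsi c b g\<bar> \<le> e * pd c b g"
    using dpsi_small[OF e] by blast
  obtain K where K: "K \<ge> 0" "\<And>g. g \<in> {d..1} \<Longrightarrow> \<bar>dpsi c b g\<bar> \<le> K"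
    using dpsi_bounded[OF d(1)] by blast
  have main: "\<bar>Phi a g * dpsi c b g\<bar> \<le> e * Aa c b a g + K * exp (- a * d / 2)"
    if a: "a \<ge> 0" and g: "0 < g" "g < 1" for a g :: real
  proof -
    have Pn: "Phi a g \<ge> 0" using Phi_nonneg[OF g(1)] .
    have An: "e * Aa c b a g \<ge> 0" using Aa_nonneg[OF c b g(1)] e by simp
    have En: "K * exp (- a * d / 2) \<ge> 0" using K by simp
    show "\<bar>Phi a g * dpsi c b g\<bar> \<le> e * Aa c b a g + K * exp (- a * d / 2)"
    proof (cases "g < d")
      case True
      have "\<bar>Phi a g * dpsi c b g\<bar> = Phi a g * \<bar>dpsi c b g\<bar>" using Pn by (simp add: abs_mult)
      also have "\<dots> \<le> Phi a g * (e * pd c b g)" using d(3)[OF g(1) True] Pn by (rule mult_left_mono)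
      also have "\<dots> = e * Aa c b a g" unfolding Aa_def by simp
      finally show ?thesis using En by simp
    next
      case False
      have "\<bar>Phi a g * dpsi c b g\<bar> = Phi a g * \<bar>dpsi c b g\<bar>" using Pn by (simp add: abs_mult)
      also have "\<dots> \<le> exp (- a * d / 2) * K"
        using Phi_le_delta[of g d a] K(2)[of g] False g a Pn by (intro mult_mono) auto
      finally show ?thesis using An by (simp add: mult.commute)
    qed
  qed
  show ?thesis using d K main by blast
qed

lemma const_int01: "set_integrable lborel {0<..<1::real} (\<lambda>_. C :: real)"
proof -
  have "set_integrable lborel {0..1::real} (\<lambda>_. C :: real)"
    by (rule borel_integrable_atLeastAtMost') (rule continuous_on_const)
  then show ?thesis by (rule set_integrable_subset) auto
qed

lemma Pd_int:
  assumes a: "a \<ge> 0"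
  shows "set_integrable lborel {0<..<1} (\<lambda>g. Phi a g * dpsi c b g)"
proof -
  obtain d K where dK: "0 < d" "K \<ge> 0" "\<And>a g. a \<ge> 0 \<Longrightarrow> 0 < g \<Longrightarrow> g < 1 \<Longrightarrow>
     \<bar>Phi a g * dpsi c b g\<bar> \<le> 1 * Aa c b a g + K * exp (- a * d / 2)"
    using Pd_bound[of 1] by auto
  have i: "set_integrable lborel {0<..<1} (\<lambda>g. Aa c b a g + K * exp (- a * d / 2))"
  proof (intro set_integral_add)
    show "set_integrable lborel {0<..<1} (Aa c b a)" by (rule Aa_int[OF c b a]) auto
  qed (rule const_int01)
  show ?thesis
  proof (rule set_integrable_bound[OF i])
    show "set_borel_measurable lborel {0<..<1} (\<lambda>g. Phi a g * dpsi c b g)"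
      using sbm[OF mPd] by simp
    show "AE x in lborel. x \<in> {0<..<1} \<longrightarrow> norm (Phi a x * dpsi c b x) \<le> norm (Aa c b a x + K * exp (- a * d / 2))"
      using dK(3)[OF a] Aa_nonneg[OF c b] dK(2) by (intro AE_I2) auto
  qed
qed

end


context
  fixes c b :: real
  assumes c: "c > 0" and b: "b > 0"
begin

lemma einterval01: "einterval 0 1 = {0<..<1::real}"
  by (auto simp: einterval_def zero_ereal_def one_ereal_def)

lemma F_deriv:
  assumes x: "x > 0"
  shows "((\<lambda>g. 2 * Phi a g * psi c b g) has_real_derivative
     (Aa c b a x - Bb c b a x) + 2 * (Phi a x * dpsi c b x)) (at x)"
proof -
  have "((\<lambda>g. 2 * Phi a g * psi c b g) has_real_derivative
      (2 * dPhi a x) * psi c b x + dpsi c b x * (2 * Phi a x)) (at x)"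
    by (rule DERIV_mult[OF DERIV_cmult[OF Phi_deriv[OF x]] psi_deriv[OF x b]])
  moreover have "(2 * dPhi a x) * psi c b x + dpsi c b x * (2 * Phi a x)
      = (Aa c b a x - Bb c b a x) + 2 * (Phi a x * dpsi c b x)"
    using key_identity[OF x, of a c b] by simp
  ultimately show ?thesis by simp
qed

lemma f_cont:
  assumes x: "x > 0"
  shows "isCont (\<lambda>g. (Aa c b a g - Bb c b a g) + 2 * (Phi a g * dpsi c b g)) x"
proof -
  have P: "(ln x)\<^sup>2 + b\<^sup>2 \<noteq> 0" using Pb[OF c b, of x] by linarith
  have Q: "x * ((ln x)\<^sup>2 + b\<^sup>2)\<^sup>2 \<noteq> 0" using x P by simp
  have R: "x * ((ln x)\<^sup>2 + b\<^sup>2) \<noteq> 0" using x P by simp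
  have S: "1 + x \<noteq> 0" using x by simp
  show ?thesis unfolding Aa_def Bb_def Phi_def dpsi_def qq_def pd_def uu_def
    using x P Q R S by (intro continuous_intros) auto
qed

lemma F_cont:
  assumes x: "x > 0"
  shows "isCont (\<lambda>g. 2 * Phi a g * psi c b g) x"
  using F_deriv[OF x] by (rule DERIV_isCont)

lemma ftc:
  assumes a: "a \<ge> 0"
  shows "(LINT g:{0<..<1}|lborel. (Aa c b a g - Bb c b a g) + 2 * (Phi a g * dpsi c b g))
     = 2 * Phi a 1 * psi c b 1"
proof -
  have int: "set_integrable lborel {0<..<1} (\<lambda>g. (Aa c b a g - Bb c b a g) + 2 * (Phi a g * dpsi c b g))"
  proof (intro set_integral_add set_integral_diff)
    show "set_integrable lborel {0<..<1} (Aa c b a)" by (rule Aa_int[OF c b a]) auto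
    show "set_integrable lborel {0<..<1} (Bb c b a)" by (rule Bb_int[OF c b a]) auto
    show "set_integrable lborel {0<..<1} (\<lambda>x. 2 * (Phi a x * dpsi c b x))"
      using Pd_int[OF c b a] by simp
  qed
  have "(LBINT x=0..1. (Aa c b a x - Bb c b a x) + 2 * (Phi a x * dpsi c b x)) = 2 * Phi a 1 * psi c b 1 - 0"
  proof (rule interval_integral_FTC_integrable[where F="\<lambda>g. 2 * Phi a g * psi c b g"])
    show "(0::ereal) < 1" by simp
    fix x assume "0 < ereal x" "ereal x < 1"
    then have x: "x > 0" by (simp add: zero_ereal_def)
    show "((\<lambda>g. 2 * Phi a g * psi c b g) has_vector_derivative
       (Aa c b a x - Bb c b a x) + 2 * (Phi a x * dpsi c b x)) (at x)"
      using F_deriv[OF x] by (simp add: has_real_derivative_iff_has_vector_derivative)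
    show "isCont (\<lambda>g. (Aa c b a g - Bb c b a g) + 2 * (Phi a g * dpsi c b g)) x"
      by (rule f_cont[OF x])
  next
    show "set_integrable lborel (einterval 0 1) (\<lambda>g. (Aa c b a g - Bb c b a g) + 2 * (Phi a g * dpsi c b g))"
      unfolding einterval01 by (rule int)
    have "((\<lambda>g::real. 2 * (sqrt (g/(1+g)) * exp (-a * (g/(1+g)))) * ((1+g) * (c/((ln g)^2 + b^2)))) \<longlongrightarrow> 0) (at_right 0)"
      using b by real_asymp
    then have "((\<lambda>g. 2 * Phi a g * psi c b g) \<longlongrightarrow> 0) (at_right 0)"
      unfolding Phi_def psi_def qq_def uu_def by (simp add: mult.assoc)
    then show "(((\<lambda>g. 2 * Phi a g * psi c b g) \<circ> real_of_ereal) \<longlongrightarrow> 0) (at_right 0)"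
      by (simp add: zero_ereal_def ereal_tendsto_simps)
    have "((\<lambda>g. 2 * Phi a g * psi c b g) \<longlongrightarrow> 2 * Phi a 1 * psi c b 1) (at_left 1)"
      using F_cont[of 1] by (simp add: isCont_def filterlim_at_split)
    then show "(((\<lambda>g. 2 * Phi a g * psi c b g) \<circ> real_of_ereal) \<longlongrightarrow> 2 * Phi a 1 * psi c b 1) (at_left 1)"
      by (simp add: one_ereal_def ereal_tendsto_simps)
  qed
  then show ?thesis
    by (simp add: interval_lebesgue_integral_def einterval01)
qed

end


lemma sint_nonneg:
  fixes f :: "real \<Rightarrow> real"
  shows "(\<And>x. x \<in> A \<Longrightarrow> 0 \<le> f x) \<Longrightarrow> 0 \<le> (LINT x:A|lborel. f x)"
  unfolding set_lebesgue_integral_def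
  by (intro integral_nonneg_AE AE_I2) (auto simp: indicator_def)

lemma sint_mono_set:
  fixes f :: "real \<Rightarrow> real"
  assumes "B \<subseteq> A" "B \<in> sets lborel" "set_integrable lborel A f" "\<And>x. x \<in> A \<Longrightarrow> 0 \<le> f x"
  shows "(LINT x:B|lborel. f x) \<le> (LINT x:A|lborel. f x)"
proof -
  have iB: "set_integrable lborel B f" by (rule set_integrable_subset[OF assms(3,2,1)])
  show ?thesis
    unfolding set_lebesgue_integral_def
    using iB assms(3) unfolding set_integrable_def
    by (intro integral_mono) (use assms(1,4) in \<open>auto simp: indicator_def\<close>)
qed

definition Dd :: "real \<Rightarrow> real \<Rightarrow> real \<Rightarrow> real" where "Dd c b a = (LINT g:{0<..}|lborel. Aa c b a g)"
definition Ee :: "real \<Rightarrow> real \<Rightarrow> real \<Rightarrow> real" where "Ee c b a = (LINT g:{0<..}|lborel. Bb c b a g)"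

context
  fixes c b :: real
  assumes c: "c > 0" and b: "b > 0"
begin

lemma Dd_lower:
  assumes a: "a \<ge> 2"
  shows "Dd c b a \<ge> c * exp (-2) / (2 * sqrt (2 * a) * ((ln a)\<^sup>2 + b\<^sup>2))"
proof -
  define m where "m = sqrt (1 / (2 * a)) * exp (-2) * (c * a / (2 * ((ln a)\<^sup>2 + b\<^sup>2)))"
  have a0: "a > 0" using a by simp
  have S: "{1/a..2/a} \<subseteq> {0<..}"
  proof
    fix x assume "x \<in> {1/a..2/a}"
    then have "1/a \<le> x" by simp
    moreover have "0 < 1/a" using a0 by simp
    ultimately have "0 < x" by linarith
    then show "x \<in> {0<..}" by simp
  qed
  have pt: "m \<le> Aa c b a g" if g: "g \<in> {1/a..2/a}" for g
  proof -
    have g0: "g > 0" using g a0 by (auto intro: less_le_trans[of 0 "1/a"])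
    have "2 / a \<le> 1" using a by simp
    then have g1: "g \<le> 1" using g by auto
    have u1: "uu g \<ge> 1 / (2 * a)" using uu_ge[OF g0 g1] g by auto
    have u2: "uu g \<le> 2 / a" using uu_le[OF g0] g by auto
    have s: "sqrt (uu g) \<ge> sqrt (1 / (2 * a))" using u1 by simp
    have "a * uu g \<le> 2" using u2 a0 by (simp add: field_simps)
    then have e: "exp (- a * uu g) \<ge> exp (-2)" by simp
    have lg: "(ln g)\<^sup>2 \<le> (ln a)\<^sup>2"
    proof -
      have "ln g \<le> 0" using g0 g1 by simp
      moreover have "ln g \<ge> - ln a"
        using g a0 g0 by (simp add: ln_inverse[symmetric] field_simps)
      moreover have "ln a \<ge> 0" using a by simp
      ultimately show ?thesis by (simp add: abs_le_square_iff[symmetric] abs_le_iff)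
    qed
    have "pd c b g = c / (g * ((ln g)\<^sup>2 + b\<^sup>2))" unfolding pd_def ..
    also have "\<dots> \<ge> c / ((2 / a) * ((ln a)\<^sup>2 + b\<^sup>2))"
      using c g g0 lg Pb[OF c b, of g] Pb[OF c b, of a] a0
      by (intro divide_left_mono mult_mono) (auto intro!: mult_pos_pos add_nonneg_pos divide_pos_pos)
    finally have p: "pd c b g \<ge> c * a / (2 * ((ln a)\<^sup>2 + b\<^sup>2))" by simp
    have "m \<le> sqrt (uu g) * exp (- a * uu g) * pd c b g"
      unfolding m_def using s e p uu_pos[OF g0] c a0 b Pb[OF c b, of a]
      by (intro mult_mono) (auto intro!: mult_nonneg_nonneg divide_nonneg_pos add_nonneg_pos)
    then show ?thesis unfolding Aa_def Phi_def by simp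
  qed
  have "(LINT g:{1/a..2/a}|lborel. m) \<le> (LINT g:{1/a..2/a}|lborel. Aa c b a g)"
  proof (rule set_integral_mono)
    show "set_integrable lborel {1/a..2/a} (\<lambda>_. m)"
      by (rule borel_integrable_atLeastAtMost') (rule continuous_on_const)
    show "set_integrable lborel {1/a..2/a} (Aa c b a)"
      using Aa_int[OF c b, of a "{1/a..2/a}"] S a0 by auto
  qed (rule pt)
  moreover have "(LINT g:{1/a..2/a}|lborel. Aa c b a g) \<le> Dd c b a" unfolding Dd_def
    using S Aa_int[OF c b, of a "{0<..}"] a0 Aa_nonneg[OF c b]
    by (intro sint_mono_set) auto
  moreover have "(LINT g:{1/a..2/a}|lborel. m) = m * (1/a)"
    using a0 by (subst set_integral_const) (auto simp: emeasure_lborel_Icc_eq field_simps)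
  ultimately have "m * (1 / a) \<le> Dd c b a" by simp
  moreover have "m * (1 / a) = c * exp (-2) / (2 * sqrt (2 * a) * ((ln a)\<^sup>2 + b\<^sup>2))"
    unfolding m_def using a0 by (simp add: real_sqrt_divide field_simps)
  ultimately show ?thesis by simp
qed

end


context
  fixes c b :: real
  assumes c: "c > 0" and b: "b > 0"
begin

lemma sets01: "{0<..<1::real} \<union> {1..} = {0<..}" by auto

lemma Dsplit: "a \<ge> 0 \<Longrightarrow> Dd c b a = (LINT g:{0<..<1}|lborel. Aa c b a g) + (LINT g:{1..}|lborel. Aa c b a g)"
  unfolding Dd_def sets01[symmetric]
  by (rule set_integral_Un) (auto intro!: Aa_int[OF c b])

lemma Esplit: "a \<ge> 0 \<Longrightarrow> Ee c b a = (LINT g:{0<..<1}|lborel. Bb c b a g) + (LINT g:{1..}|lborel. Bb c b a g)"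
  unfolding Ee_def sets01[symmetric]
  by (rule set_integral_Un) (auto intro!: Bb_int[OF c b])

lemma FT:
  assumes a: "a \<ge> 0"
  shows "(LINT g:{0<..<1}|lborel. Aa c b a g) - (LINT g:{0<..<1}|lborel. Bb c b a g)
     = 2 * Phi a 1 * psi c b 1 - 2 * (LINT g:{0<..<1}|lborel. Phi a g * dpsi c b g)"
proof -
  have iA: "set_integrable lborel {0<..<1} (Aa c b a)" by (rule Aa_int[OF c b a]) auto
  have iB: "set_integrable lborel {0<..<1} (Bb c b a)" by (rule Bb_int[OF c b a]) auto
  have iP: "set_integrable lborel {0<..<1} (\<lambda>g. 2 * (Phi a g * dpsi c b g))"
    using Pd_int[OF c b a] by simp
  have "2 * Phi a 1 * psi c b 1 = (LINT g:{0<..<1}|lborel. (Aa c b a g - Bb c b a g) + 2 * (Phi a g * dpsi c b g))"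
    using ftc[OF c b a] by simp
  also have "\<dots> = (LINT g:{0<..<1}|lborel. Aa c b a g) - (LINT g:{0<..<1}|lborel. Bb c b a g)
      + 2 * (LINT g:{0<..<1}|lborel. Phi a g * dpsi c b g)"
    using iA iB iP by (simp add: set_integral_add(2)[OF set_integral_diff(1)[OF iA iB] iP] set_integral_diff(2)[OF iA iB])
  finally show ?thesis by simp
qed

lemma tail_bound:
  assumes a: "a \<ge> 0"
  shows "\<bar>(LINT g:{1..}|lborel. Aa c b a g) - (LINT g:{1..}|lborel. Bb c b a g)\<bar>
     \<le> (1 + 2 * a) * exp (- a / 2) * (LINT g:{0<..}|lborel. pd c b g)"
proof -
  have S: "{1::real..} \<subseteq> {0<..}" by auto
  have iA: "set_integrable lborel {1..} (Aa c b a)" by (rule Aa_int[OF c b a]) auto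
  have iB: "set_integrable lborel {1..} (Bb c b a)" by (rule Bb_int[OF c b a]) auto
  have ip: "set_integrable lborel {1..} (pd c b)" by (rule pd_int_sub[OF c b]) auto
  have "\<bar>(LINT g:{1..}|lborel. Aa c b a g) - (LINT g:{1..}|lborel. Bb c b a g)\<bar>
      = \<bar>LINT g:{1..}|lborel. Aa c b a g - Bb c b a g\<bar>"
    using iA iB by simp
  also have "\<dots> \<le> (LINT g:{1..}|lborel. \<bar>Aa c b a g - Bb c b a g\<bar>)"
    using set_integral_norm_bound[OF set_integral_diff(1)[OF iA iB]] by simp
  also have "\<dots> \<le> (LINT g:{1..}|lborel. ((1 + 2 * a) * exp (- a / 2)) * pd c b g)"
  proof (rule set_integral_mono)
    show "set_integrable lborel {1..} (\<lambda>g. \<bar>Aa c b a g - Bb c b a g\<bar>)"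
      by (rule set_integrable_abs[OF set_integral_diff(1)[OF iA iB]])
    show "set_integrable lborel {1..} (\<lambda>g. ((1 + 2 * a) * exp (- a / 2)) * pd c b g)"
      using ip by simp
    fix g :: real assume "g \<in> {1..}"
    then have g: "g \<ge> 1" by simp
    then have g0: "g > 0" by simp
    have u: "0 < uu g" "uu g < 1" using uu_pos[OF g0] uu_less1[OF g0] by auto
    have "Aa c b a g - Bb c b a g = Phi a g * pd c b g * (1 - 2 * a * uu g)"
      unfolding Aa_def Bb_def by (simp add: algebra_simps)
    moreover have "\<bar>1 - 2 * a * uu g\<bar> \<le> 1 + 2 * a"
    proof -
      have "0 \<le> 2 * a * uu g" using a u by simp
      moreover have "2 * a * uu g \<le> 2 * a" using a u by (simp add: mult_left_le)
      ultimately show ?thesis by linarith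
    qed
    moreover have "0 \<le> Phi a g * pd c b g" using Phi_nonneg[OF g0] pd_pos[OF c b g0] by simp
    moreover have "Phi a g * pd c b g \<le> exp (- a / 2) * pd c b g"
      using Phi_le_ge1[OF g a] pd_pos[OF c b g0] by (simp add: mult_right_mono)
    ultimately have "\<bar>Aa c b a g - Bb c b a g\<bar> \<le> exp (- a / 2) * pd c b g * (1 + 2 * a)"
    proof -
      assume eq: "Aa c b a g - Bb c b a g = Phi a g * pd c b g * (1 - 2 * a * uu g)"
        and ab: "\<bar>1 - 2 * a * uu g\<bar> \<le> 1 + 2 * a" and nn: "0 \<le> Phi a g * pd c b g"
        and le: "Phi a g * pd c b g \<le> exp (- a / 2) * pd c b g"
      have "\<bar>Aa c b a g - Bb c b a g\<bar> = (Phi a g * pd c b g) * \<bar>1 - 2 * a * uu g\<bar>"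
        unfolding eq abs_mult[of "Phi a g * pd c b g"] abs_of_nonneg[OF nn] ..
      also have "\<dots> \<le> (Phi a g * pd c b g) * (1 + 2 * a)" by (rule mult_left_mono[OF ab nn])
      also have "\<dots> \<le> exp (- a / 2) * pd c b g * (1 + 2 * a)" by (rule mult_right_mono[OF le]) (use a in simp)
      finally show ?thesis .
    qed
    then show "\<bar>Aa c b a g - Bb c b a g\<bar> \<le> ((1 + 2 * a) * exp (- a / 2)) * pd c b g"
      by (simp add: mult_ac)
  qed
  also have "\<dots> = ((1 + 2 * a) * exp (- a / 2)) * (LINT g:{1..}|lborel. pd c b g)" by simp
  also have "\<dots> \<le> ((1 + 2 * a) * exp (- a / 2)) * (LINT g:{0<..}|lborel. pd c b g)"
    using a S pd_integrable[OF c b] pd_pos[OF c b]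
    by (intro mult_left_mono sint_mono_set) (auto intro: less_imp_le)
  finally show ?thesis by simp
qed

lemma mid_bound:
  assumes a: "a \<ge> 0" and e: "e \<ge> 0" and K: "K \<ge> 0"
    and pt: "\<And>g. 0 < g \<Longrightarrow> g < 1 \<Longrightarrow> \<bar>Phi a g * dpsi c b g\<bar> \<le> e * Aa c b a g + K * exp (- a * d / 2)"
  shows "\<bar>LINT g:{0<..<1}|lborel. Phi a g * dpsi c b g\<bar> \<le> e * Dd c b a + K * exp (- a * d / 2)"
proof -
  have iA: "set_integrable lborel {0<..<1} (Aa c b a)" by (rule Aa_int[OF c b a]) auto
  have iP: "set_integrable lborel {0<..<1} (\<lambda>g. Phi a g * dpsi c b g)" by (rule Pd_int[OF c b a])
  have "\<bar>LINT g:{0<..<1}|lborel. Phi a g * dpsi c b g\<bar> \<le> (LINT g:{0<..<1}|lborel. \<bar>Phi a g * dpsi c b g\<bar>)"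
    using set_integral_norm_bound[OF iP] by simp
  also have "\<dots> \<le> (LINT g:{0<..<1}|lborel. e * Aa c b a g + K * exp (- a * d / 2))"
  proof (rule set_integral_mono)
    show "set_integrable lborel {0<..<1} (\<lambda>g. \<bar>Phi a g * dpsi c b g\<bar>)" by (rule set_integrable_abs[OF iP])
    show "set_integrable lborel {0<..<1} (\<lambda>g. e * Aa c b a g + K * exp (- a * d / 2))"
      using iA const_int01[OF c b] by (intro set_integral_add) auto
  qed (use pt in auto)
  also have "\<dots> = e * (LINT g:{0<..<1}|lborel. Aa c b a g) + K * exp (- a * d / 2)"
    using iA const_int01[OF c b, of "K * exp (- a * d / 2)"]
    by (simp add: set_integral_add(2) set_integral_const)
  also have "\<dots> \<le> e * Dd c b a + K * exp (- a * d / 2)"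
  proof -
    have "(LINT g:{0<..<1}|lborel. Aa c b a g) \<le> Dd c b a"
      unfolding Dd_def using Aa_int[OF c b a, of "{0<..}"] Aa_nonneg[OF c b]
      by (intro sint_mono_set) auto
    then show ?thesis using e by (simp add: mult_left_mono)
  qed
  finally show ?thesis .
qed

lemma val_bound: "a \<ge> 0 \<Longrightarrow> \<bar>2 * Phi a 1 * psi c b 1\<bar> \<le> 4 * (c / b\<^sup>2) * exp (- a / 2)"
proof -
  assume a: "a \<ge> 0"
  have "Phi a 1 = sqrt (1/2) * exp (- a / 2)" unfolding Phi_def uu_def by simp
  moreover have "psi c b 1 = 2 * (c / b\<^sup>2)" unfolding psi_def qq_def by simp
  ultimately have "2 * Phi a 1 * psi c b 1 = 4 * (c / b\<^sup>2) * (sqrt (1/2) * exp (- a / 2))"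
    by simp
  moreover have "sqrt (1/2) * exp (- a / 2) \<le> exp (- a / 2)"
    by (rule mult_left_le_one_le) auto
  moreover have "4 * (c / b\<^sup>2) \<ge> 0" using c by simp
  ultimately show ?thesis
  proof -
    assume eq: "2 * Phi a 1 * psi c b 1 = 4 * (c / b\<^sup>2) * (sqrt (1/2) * exp (- a / 2))"
      and le: "sqrt (1/2) * exp (- a / 2) \<le> exp (- a / 2)" and X: "4 * (c / b\<^sup>2) \<ge> 0"
    have Y: "0 \<le> sqrt (1/2) * exp (- a / 2)" by simp
    have "\<bar>2 * Phi a 1 * psi c b 1\<bar> = 4 * (c / b\<^sup>2) * (sqrt (1/2) * exp (- a / 2))"
      unfolding eq by (rule abs_of_nonneg[OF mult_nonneg_nonneg[OF X Y]])
    also have "\<dots> \<le> 4 * (c / b\<^sup>2) * exp (- a / 2)" by (rule mult_left_mono[OF le X])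
    finally show ?thesis .
  qed
qed

end


lemma R_lim:
  fixes K1 P1 d b c :: real
  assumes "K1 > 0" "P1 > 0" "d > 0" "b > 0" "c > 0"
  shows "((\<lambda>a. (4 * (c / b\<^sup>2) * exp (- a / 2) + 2 * (K1 * exp (- a * d / 2)) + (1 + 2 * a) * exp (- a / 2) * P1)
     / (c * exp (-2) / (2 * sqrt (2 * a) * ((ln a)\<^sup>2 + b\<^sup>2)))) \<longlongrightarrow> 0) at_top"
proof -
  let ?lb = "\<lambda>a::real. c * exp (-2) / (2 * sqrt (2 * a) * ((ln a)\<^sup>2 + b\<^sup>2))"
  have 1: "((\<lambda>a. (4 * (c / b\<^sup>2) * exp (- a / 2)) / ?lb a) \<longlongrightarrow> 0) at_top"
    using assms by real_asymp
  have 2: "((\<lambda>a. (2 * (K1 * exp (- a * d / 2))) / ?lb a) \<longlongrightarrow> 0) at_top"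
    using assms by real_asymp
  have 3: "((\<lambda>a. ((1 + 2 * a) * exp (- a / 2) * P1) / ?lb a) \<longlongrightarrow> 0) at_top"
    using assms by real_asymp
  have "((\<lambda>a. (4 * (c / b\<^sup>2) * exp (- a / 2)) / ?lb a + (2 * (K1 * exp (- a * d / 2))) / ?lb a
      + ((1 + 2 * a) * exp (- a / 2) * P1) / ?lb a) \<longlongrightarrow> 0 + 0 + 0) at_top"
    by (intro tendsto_add 1 2 3)
  then show ?thesis by (simp only: add_divide_distrib add_0_left)
qed

context
  fixes c b :: real
  assumes c: "c > 0" and b: "b > 0"
begin

lemma ratio_lim: "((\<lambda>a. Ee c b a / Dd c b a) \<longlongrightarrow> 1) at_top"
proof (rule tendstoI)
  fix eps :: real assume eps: "eps > 0"
  define e where "e = eps / 4"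
  have e: "e > 0" using eps by (simp add: e_def)
  obtain d K where dK: "0 < d" "d < 1" "K \<ge> 0"
    "\<And>a g. a \<ge> 0 \<Longrightarrow> 0 < g \<Longrightarrow> g < 1 \<Longrightarrow> \<bar>Phi a g * dpsi c b g\<bar> \<le> e * Aa c b a g + K * exp (- a * d / 2)"
    using Pd_bound[OF c b e] by blast
  define P1 where "P1 = \<bar>LINT g:{0<..}|lborel. pd c b g\<bar> + 1"
  define K1 where "K1 = K + 1"
  have P1: "P1 > 0" unfolding P1_def by simp
  have K1: "K1 > 0" using dK(3) unfolding K1_def by simp
  define R where "R a = 4 * (c / b\<^sup>2) * exp (- a / 2) + 2 * (K1 * exp (- a * d / 2)) + (1 + 2 * a) * exp (- a / 2) * P1" for a
  define lb where "lb a = c * exp (-2) / (2 * sqrt (2 * a) * ((ln a)\<^sup>2 + b\<^sup>2))" for a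
  have "((\<lambda>a. R a / lb a) \<longlongrightarrow> 0) at_top"
    unfolding R_def lb_def by (rule R_lim[OF K1 P1 dK(1) b c])
  then have ev1: "eventually (\<lambda>a. R a / lb a < e) at_top"
    using e by (rule order_tendstoD(2))
  have ev2: "eventually (\<lambda>a::real. a \<ge> 2) at_top" by (rule eventually_ge_at_top)
  show "eventually (\<lambda>a. dist (Ee c b a / Dd c b a) 1 < eps) at_top"
    using ev1 ev2
  proof eventually_elim
    case (elim a)
    then have a: "a \<ge> 0" "a \<ge> 2" by auto
    have lbpos: "lb a > 0" unfolding lb_def using c a Pb[OF c b, of a]
      by (intro divide_pos_pos mult_pos_pos) auto
    have Dlb: "Dd c b a \<ge> lb a" unfolding lb_def by (rule Dd_lower[OF c b a(2)])
    then have Dpos: "Dd c b a > 0" using lbpos by linarith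
    define M where "M = (LINT g:{0<..<1}|lborel. Phi a g * dpsi c b g)"
    define T where "T = (LINT g:{1..}|lborel. Aa c b a g) - (LINT g:{1..}|lborel. Bb c b a g)"
    have eq: "Dd c b a - Ee c b a = (2 * Phi a 1 * psi c b 1 - 2 * M) + T"
      using Dsplit[OF c b a(1)] Esplit[OF c b a(1)] FT[OF c b a(1)] unfolding M_def T_def by simp
    have bM: "\<bar>M\<bar> \<le> e * Dd c b a + K * exp (- a * d / 2)"
      unfolding M_def by (rule mid_bound[OF c b a(1) _ dK(3)]) (use e dK(4)[OF a(1)] in auto)
    have bT: "\<bar>T\<bar> \<le> (1 + 2 * a) * exp (- a / 2) * P1"
    proof -
      have "\<bar>T\<bar> \<le> (1 + 2 * a) * exp (- a / 2) * (LINT g:{0<..}|lborel. pd c b g)"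
        unfolding T_def by (rule tail_bound[OF c b a(1)])
      also have "\<dots> \<le> (1 + 2 * a) * exp (- a / 2) * P1"
        unfolding P1_def using a by (intro mult_left_mono) auto
      finally show ?thesis .
    qed
    have bV: "\<bar>2 * Phi a 1 * psi c b 1\<bar> \<le> 4 * (c / b\<^sup>2) * exp (- a / 2)" by (rule val_bound[OF c b a(1)])
    have "K * exp (- a * d / 2) \<le> K1 * exp (- a * d / 2)" unfolding K1_def by simp
    have kk: "K * exp (- a * d / 2) \<le> K1 * exp (- a * d / 2)" unfolding K1_def by simp
    have diff: "\<bar>Ee c b a - Dd c b a\<bar> \<le> 2 * e * Dd c b a + R a"
      unfolding R_def
      using eq abs_le_D1[OF bM] abs_le_D2[OF bM] abs_le_D1[OF bT] abs_le_D2[OF bT]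
        abs_le_D1[OF bV] abs_le_D2[OF bV] kk
      by (intro abs_leI) linarith+
    have "dist (Ee c b a / Dd c b a) 1 = \<bar>Ee c b a - Dd c b a\<bar> / Dd c b a"
      using Dpos by (simp add: dist_real_def field_simps)
    also have "\<dots> \<le> (2 * e * Dd c b a + R a) / Dd c b a"
      using diff Dpos by (simp add: divide_right_mono)
    also have "\<dots> = 2 * e + R a / Dd c b a" using Dpos by (simp add: field_simps)
    also have "R a / Dd c b a \<le> R a / lb a"
    proof -
      have "R a \<ge> 0" unfolding R_def using K1 P1 a c b by (intro add_nonneg_nonneg mult_nonneg_nonneg) auto
      then show ?thesis using Dlb lbpos by (intro divide_left_mono) auto
    qed
    finally have "dist (Ee c b a / Dd c b a) 1 \<le> 2 * e + R a / lb a" by simp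
    then show ?case using elim e unfolding e_def by linarith
  qed
qed

end


definition dM :: "real \<Rightarrow> real \<Rightarrow> real \<Rightarrow> real" where
  "dM c b y = (LINT g:{0<..}|lborel. - y * uu g * kern y g * pd c b g)"

lemma kern_Phi: "kern y g = Phi (y\<^sup>2 / 2) g / sqrt (2 * pi)"
  unfolding kern_def Phi_def by (simp add: mult_ac)

lemma kern_deriv:
  "((\<lambda>y. kern y g * pd c b g) has_real_derivative - y * uu g * kern y g * pd c b g) (at y)"
  unfolding kern_def
  by (auto intro!: derivative_eq_intros simp: power2_eq_square field_simps)

lemma dk_bound:
  assumes g: "g > 0"
  shows "\<bar>- y * uu g * kern y g\<bar> \<le> 1"
proof -
  have u: "0 < uu g" "uu g < 1" using uu_pos[OF g] uu_less1[OF g] by auto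
  define z where "z = \<bar>y\<bar> * sqrt (uu g)"
  have z2: "z\<^sup>2 = y\<^sup>2 * uu g" unfolding z_def using u by (simp add: power_mult_distrib)
  have z0: "z \<ge> 0" unfolding z_def using u by simp
  have "1 + z\<^sup>2 / 2 \<le> exp (z\<^sup>2 / 2)" by (rule exp_ge_add_one_self)
  moreover have "z \<le> 1 + z\<^sup>2 / 2"
  proof -
    have "0 \<le> (z - 1)\<^sup>2" by simp
    then show ?thesis by (simp add: power2_eq_square algebra_simps)
  qed
  ultimately have "z \<le> exp (z\<^sup>2 / 2)" by linarith
  then have ze: "z * exp (- (z\<^sup>2 / 2)) \<le> 1"
    by (simp add: exp_minus field_simps)
  have "\<bar>- y * uu g * kern y g\<bar> = uu g * (z * exp (- (z\<^sup>2 / 2))) / sqrt (2 * pi)"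
    unfolding kern_def z_def using u
    by (simp add: abs_mult z2[unfolded z_def] mult_ac power_mult_distrib)
  also have "\<dots> \<le> 1 * 1 / 1"
  proof (rule frac_le)
    show "uu g * (z * exp (- (z\<^sup>2 / 2))) \<le> 1 * 1"
      using u ze z0 by (intro mult_mono) auto
    show "1 \<le> sqrt (2 * pi)" using pi_gt3 by simp
  qed auto
  finally show ?thesis by simp
qed

context
  fixes c b :: real
  assumes c: "c > 0" and b: "b > 0"
begin

lemma Mf_deriv: "(Mf c b has_real_derivative dM c b y) (at y)"
  unfolding Mf_def dM_def
proof (rule has_deriv_set_integral[where w="pd c b"])
  show "set_integrable lborel {0<..} (\<lambda>g. kern x g * pd c b g)" for x
  proof (rule set_integrable_bound[OF pd_integrable[OF c b]])
    show "set_borel_measurable lborel {0<..} (\<lambda>g. kern x g * pd c b g)"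
      by (rule sbm) (unfold kern_def uu_def pd_def, measurable)
    show "AE g in lborel. g \<in> {0<..} \<longrightarrow> norm (kern x g * pd c b g) \<le> norm (pd c b g)"
      using kern_le1 kern_nonneg pd_pos[OF c b]
      by (intro AE_I2) (auto simp: abs_mult intro!: mult_left_le_one_le)
  qed
  show "((\<lambda>x. kern x t * pd c b t) has_real_derivative - x * uu t * kern x t * pd c b t) (at x)" for x t
    by (rule kern_deriv)
  show "set_borel_measurable lborel {0<..} (\<lambda>g. - x * uu g * kern x g * pd c b g)" for x
    by (rule sbm) (unfold kern_def uu_def pd_def, measurable)
  show "set_integrable lborel {0<..} (pd c b)" by (rule pd_integrable[OF c b])
  show "\<bar>- x * uu t * kern x t * pd c b t\<bar> \<le> pd c b t" if "t \<in> {0<..}" for x t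
  proof -
    have t: "t > 0" using that by simp
    have "\<bar>- x * uu t * kern x t * pd c b t\<bar> = \<bar>- x * uu t * kern x t\<bar> * pd c b t"
      using pd_pos[OF c b t] by (simp add: abs_mult)
    also have "\<dots> \<le> 1 * pd c b t"
      using dk_bound[OF t, of x] pd_pos[OF c b t] by (intro mult_right_mono) auto
    finally show ?thesis by simp
  qed
qed

lemma Mf_Dd: "Mf c b y = Dd c b (y\<^sup>2 / 2) / sqrt (2 * pi)"
proof -
  have "Mf c b y = (LINT g:{0<..}|lborel. Aa c b (y\<^sup>2 / 2) g / sqrt (2 * pi))"
    unfolding Mf_def Aa_def kern_Phi by (simp add: mult_ac)
  then show ?thesis unfolding Dd_def by simp
qed

lemma dM_Ee: "y * dM c b y = - Ee c b (y\<^sup>2 / 2) / sqrt (2 * pi)"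
proof -
  have "y * dM c b y = (LINT g:{0<..}|lborel. y * (- y * uu g * kern y g * pd c b g))"
    unfolding dM_def by (rule set_integral_mult_right[symmetric])
  also have "\<dots> = (LINT g:{0<..}|lborel. - Bb c b (y\<^sup>2 / 2) g / sqrt (2 * pi))"
    unfolding Bb_def kern_Phi by (simp add: power2_eq_square mult_ac)
  also have "\<dots> = - (LINT g:{0<..}|lborel. Bb c b (y\<^sup>2 / 2) g) / sqrt (2 * pi)"
    unfolding set_lebesgue_integral_def by simp
  finally show ?thesis unfolding Ee_def .
qed

lemma Mf_pos: "\<bar>y\<bar> \<ge> 2 \<Longrightarrow> Mf c b y > 0"
proof -
  assume y: "\<bar>y\<bar> \<ge> 2"
  have "y\<^sup>2 \<ge> 2\<^sup>2" using y by (metis abs_le_square_iff abs_numeral)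
  then have a: "y\<^sup>2 / 2 \<ge> 2" by simp
  have "Dd c b (y\<^sup>2 / 2) \<ge> c * exp (-2) / (2 * sqrt (2 * (y\<^sup>2 / 2)) * ((ln (y\<^sup>2 / 2))\<^sup>2 + b\<^sup>2))"
    by (rule Dd_lower[OF c b a])
  moreover have "c * exp (-2) / (2 * sqrt (2 * (y\<^sup>2 / 2)) * ((ln (y\<^sup>2 / 2))\<^sup>2 + b\<^sup>2)) > 0"
    using c a Pb[OF c b, of "y\<^sup>2 / 2"] by (intro divide_pos_pos mult_pos_pos) auto
  ultimately show ?thesis unfolding Mf_Dd by simp
qed

lemma Mf_even: "Mf c b (- y) = Mf c b y"
  unfolding Mf_Dd by simp

lemma score_lim: "((\<lambda>y. y * dM c b y / Mf c b y) \<longlongrightarrow> -1) at_infinity"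
proof -
  have f: "filterlim (\<lambda>y::real. y\<^sup>2 / 2) at_top at_infinity"
    unfolding at_infinity_eq_at_top_bot by (intro filterlim_sup) real_asymp+
  have "((\<lambda>y. - (Ee c b (y\<^sup>2 / 2) / Dd c b (y\<^sup>2 / 2))) \<longlongrightarrow> -1) at_infinity"
    by (intro tendsto_minus filterlim_compose[OF ratio_lim[OF c b] f])
  moreover have "y * dM c b y / Mf c b y = - (Ee c b (y\<^sup>2 / 2) / Dd c b (y\<^sup>2 / 2))" for y
    unfolding dM_Ee Mf_Dd by simp
  ultimately show ?thesis by simp
qed

end


context
  fixes m dm :: "real \<Rightarrow> real"
  assumes even: "\<And>y. m (- y) = m y"
    and pos: "\<And>y. \<bar>y\<bar> \<ge> 2 \<Longrightarrow> m y > 0"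
    and der: "\<And>y. (m has_real_derivative dm y) (at y)"
    and lim: "((\<lambda>y. y * dm y / m y) \<longlongrightarrow> -1) at_infinity"
begin

definition hh :: "real \<Rightarrow> real" where "hh s = ln s + ln (m s)"

lemma hh_deriv: "s \<ge> 2 \<Longrightarrow> (hh has_real_derivative (1 + s * dm s / m s) / s) (at s)"
proof -
  assume s: "s \<ge> 2"
  have mp: "m s > 0" using pos[of s] s by simp
  have "(hh has_real_derivative inverse s + inverse (m s) * dm s) (at s)"
    unfolding hh_def using s
    by (intro DERIV_add DERIV_ln[of s] DERIV_chain2[OF DERIV_ln[OF mp] der]) auto
  moreover have "inverse s + inverse (m s) * dm s = (1 + s * dm s / m s) / s"
    using s mp by (simp add: field_simps)
  ultimately show ?thesis by simp
qed

lemma lim_top: "((\<lambda>y. y * dm y / m y) \<longlongrightarrow> -1) at_top"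
  using lim by (rule filterlim_mono) (auto simp: at_top_le_at_infinity)

lemma hh_diff:
  assumes cp: "c > 0"
  shows "((\<lambda>s. hh (c * s) - hh s) \<longlongrightarrow> 0) at_top"
proof (rule tendstoI)
  fix eps :: real assume eps: "eps > 0"
  define C where "C = (\<bar>c - 1\<bar> + 1) * max 1 (1 / c)"
  have C: "C > 0" unfolding C_def by (intro mult_pos_pos) auto
  define e where "e = eps / (2 * C)"
  have e: "e > 0" using eps C by (simp add: e_def)
  have "eventually (\<lambda>y. \<bar>1 + y * dm y / m y\<bar> < e) at_top"
  proof -
    have "((\<lambda>y. 1 + y * dm y / m y) \<longlongrightarrow> 1 + -1) at_top" by (intro tendsto_add tendsto_const lim_top)
    then have "((\<lambda>y. 1 + y * dm y / m y) \<longlongrightarrow> 0) at_top" by simp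
    then show ?thesis using e by (simp add: tendsto_iff dist_real_def)
  qed
  then obtain S0 where S0: "\<And>y. y \<ge> S0 \<Longrightarrow> \<bar>1 + y * dm y / m y\<bar> < e"
    unfolding eventually_at_top_linorder by auto
  define S1 where "S1 = max S0 2 * max 1 (1 / c)"
  show "eventually (\<lambda>s. dist (hh (c * s) - hh s) 0 < eps) at_top"
  proof (rule eventually_at_top_linorderI[of S1])
    fix s assume s: "s \<ge> S1"
    have mx: "max 1 (1 / c) \<ge> 1" by simp
    have sS: "s \<ge> max S0 2" using s mult_left_mono[OF mx, of "max S0 2"] unfolding S1_def by linarith
    have csS: "c * s \<ge> max S0 2"
    proof -
      have "max 1 (1/c) \<ge> 1/c" by simp
      then have "S1 \<ge> max S0 2 * (1 / c)" unfolding S1_def by (intro mult_left_mono) auto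
      then have "s \<ge> max S0 2 / c" using s by simp
      then have "max S0 2 \<le> s * c" using pos_divide_le_eq[OF cp] by blast
      then show ?thesis by (simp add: mult.commute)
    qed
    define lo where "lo = min s (c * s)"
    define hi where "hi = max s (c * s)"
    have lo: "lo \<ge> max S0 2" using sS csS by (simp add: lo_def)
    have lo0: "lo > 0" using lo by simp
    have bnd: "\<bar>(1 + z * dm z / m z) / z\<bar> \<le> e / lo" if z: "z \<in> {lo..hi}" for z
    proof -
      have zl: "z \<ge> lo" using z by simp
      then have z2: "z \<ge> max S0 2" using lo by linarith
      have "\<bar>(1 + z * dm z / m z) / z\<bar> = \<bar>1 + z * dm z / m z\<bar> / z" using z2 by (simp add: abs_divide)
      also have "\<dots> \<le> e / z" using S0[of z] z2 by (intro divide_right_mono) auto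
      also have "\<dots> \<le> e / lo" using e lo0 zl by (intro divide_left_mono) auto
      finally show ?thesis .
    qed
    have "norm (hh (c * s) - hh s) \<le> (e / lo) * norm (c * s - s)"
    proof (rule field_differentiable_bound[where S="{lo..hi}" and f=hh and x="c * s" and y=s and B="e / lo" and f'="\<lambda>z. (1 + z * dm z / m z) / z"])
      show "convex {lo..hi}" by simp
      show "(hh has_field_derivative (1 + z * dm z / m z) / z) (at z within {lo..hi})" if "z \<in> {lo..hi}" for z
      proof -
        have "z \<ge> 2" using that lo by simp
        then show ?thesis by (rule has_field_derivative_at_within[OF hh_deriv])
      qed
      show "norm ((1 + z * dm z / m z) / z) \<le> e / lo" if "z \<in> {lo..hi}" for z
        using bnd[OF that] by simp
      show "c * s \<in> {lo..hi}" "s \<in> {lo..hi}" by (auto simp: lo_def hi_def)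
    qed
    also have "\<dots> = e * (\<bar>c - 1\<bar> * (s / lo))"
    proof -
      have "c * s - s = (c - 1) * s" by (simp add: algebra_simps)
      then have "norm (c * s - s) = \<bar>c - 1\<bar> * s" using sS by (simp add: abs_mult)
      then show ?thesis by simp
    qed
    also have "\<dots> \<le> e * ((\<bar>c - 1\<bar> + 1) * max 1 (1 / c))"
    proof -
      have "s / lo \<le> max 1 (1 / c)"
      proof (cases "s \<le> c * s")
        case True
        then have "lo = s" by (simp add: lo_def)
        then show ?thesis using lo0 by simp
      next
        case False
        then have "lo = c * s" by (simp add: lo_def)
        then have "s / lo = 1 / c" using sS cp by simp
        then show ?thesis by simp
      qed
      then show ?thesis using e lo0 sS
        by (intro mult_left_mono mult_mono) auto
    qed
    also have "\<dots> = eps / 2" unfolding e_def C_def[symmetric] using C by simp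
    finally show "dist (hh (c * s) - hh s) 0 < eps" using eps by (simp add: dist_real_def)
  qed
qed

definition LL :: "real \<Rightarrow> real" where "LL x = sqrt x * m (sqrt x)"

lemma LL_pos: "x \<ge> 4 \<Longrightarrow> LL x > 0"
proof -
  assume x: "x \<ge> 4"
  have "sqrt x \<ge> sqrt 4" using x by (subst real_sqrt_le_iff) simp
  then have s: "sqrt x \<ge> 2" by simp
  then have a: "\<bar>sqrt x\<bar> = sqrt x" by simp
  have "m (sqrt x) > 0" using pos[of "sqrt x"] s unfolding a by simp
  moreover have "sqrt x > 0" using x by simp
  ultimately show ?thesis unfolding LL_def by simp
qed

lemma LL_hh: "x \<ge> 4 \<Longrightarrow> LL x = exp (hh (sqrt x))"
proof -
  assume x: "x \<ge> 4"
  have "sqrt x \<ge> sqrt 4" using x by (subst real_sqrt_le_iff) simp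
  then have s: "sqrt x \<ge> 2" by simp
  then have a: "\<bar>sqrt x\<bar> = sqrt x" by simp
  have mp: "m (sqrt x) > 0" using pos[of "sqrt x"] s unfolding a by simp
  have sp: "sqrt x > 0" using x by simp
  show ?thesis unfolding LL_def hh_def using sp mp by (simp add: exp_add)
qed

lemma slowly: "slowly_varying LL"
  unfolding slowly_varying_def
proof (intro conjI allI impI)
  show "eventually (\<lambda>x. LL x > 0) at_top"
    using eventually_ge_at_top[of "4::real"] by eventually_elim (rule LL_pos)
  fix t :: real assume t: "t > 0"
  have st: "sqrt t > 0" using t by simp
  have "((\<lambda>x. exp (hh (sqrt t * sqrt x) - hh (sqrt x))) \<longlongrightarrow> exp 0) at_top"
    by (intro tendsto_exp filterlim_compose[OF hh_diff[OF st] sqrt_at_top])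
  moreover have "eventually (\<lambda>x. exp (hh (sqrt t * sqrt x) - hh (sqrt x)) = LL (t * x) / LL x) at_top"
    using eventually_ge_at_top[of "max 4 (4 / t)"]
  proof eventually_elim
    case (elim x)
    have x4: "x \<ge> 4" using elim by simp
    have "4 / t \<le> x" using elim by simp
    then have tx4: "t * x \<ge> 4" using t by (simp add: field_simps)
    have "LL (t * x) / LL x = exp (hh (sqrt (t * x))) / exp (hh (sqrt x))"
      using LL_hh[OF x4] LL_hh[OF tx4] by simp
    also have "\<dots> = exp (hh (sqrt t * sqrt x) - hh (sqrt x))"
      by (simp add: real_sqrt_mult exp_diff)
    finally show ?case ..
  qed
  ultimately show "((\<lambda>x. LL (t * x) / LL x) \<longlongrightarrow> 1) at_top"
    by (simp add: Lim_transform_eventually)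
qed

lemma LL_diff: "eventually (\<lambda>x. LL differentiable at x) at_top"
  using eventually_gt_at_top[of "0::real"]
proof eventually_elim
  case (elim x)
  have "(LL has_real_derivative (inverse (sqrt x) / 2) * m (sqrt x) + dm (sqrt x) * (inverse (sqrt x) / 2) * sqrt x) (at x)"
    unfolding LL_def
    by (rule DERIV_mult[OF DERIV_real_sqrt[OF elim] DERIV_chain2[OF der DERIV_real_sqrt[OF elim]]])
  then show ?case
    by (rule differentiableI[OF has_field_derivative_imp_has_derivative])
qed

lemma dlnm: "\<bar>y\<bar> \<ge> 2 \<Longrightarrow> ((\<lambda>t. ln (m t)) has_real_derivative dm y / m y) (at y)"
proof -
  assume y: "\<bar>y\<bar> \<ge> 2"
  have "((\<lambda>t. ln (m t)) has_real_derivative inverse (m y) * dm y) (at y)"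
    by (rule DERIV_chain2[OF DERIV_ln[OF pos[OF y]] der])
  then show ?thesis by (simp add: field_simps)
qed

lemma LL_sq: "\<bar>t\<bar> > 2 \<Longrightarrow> ln (LL (t\<^sup>2)) = ln (t\<^sup>2) / 2 + ln (m t)"
proof -
  assume t: "\<bar>t\<bar> > 2"
  have mt: "m \<bar>t\<bar> = m t" using even[of t] by (cases "t \<ge> 0") auto
  have mp: "m t > 0" using pos[of t] t by simp
  have tp: "\<bar>t\<bar> > 0" using t by simp
  have "LL (t\<^sup>2) = \<bar>t\<bar> * m t" unfolding LL_def using mt by simp
  then have "ln (LL (t\<^sup>2)) = ln \<bar>t\<bar> + ln (m t)" using tp mp by (simp add: ln_mult)
  moreover have "ln (t\<^sup>2) = 2 * ln \<bar>t\<bar>"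
  proof -
    have "t\<^sup>2 = \<bar>t\<bar> ^ 2" by simp
    then show ?thesis using ln_realpow[of "\<bar>t\<bar>" 2] by simp
  qed
  ultimately show ?thesis by simp
qed

lemma dlnL: "\<bar>y\<bar> > 2 \<Longrightarrow> ((\<lambda>t. ln (LL (t\<^sup>2))) has_real_derivative 1 / y + dm y / m y) (at y)"
proof -
  assume y: "\<bar>y\<bar> > 2"
  have y0: "y \<noteq> 0" using y by auto
  have d1: "((\<lambda>t. ln (t\<^sup>2) / 2) has_real_derivative 1 / y) (at y)"
  proof -
    have "y * y > 0" using y0 by (simp add: zero_less_mult_iff linorder_neq_iff disj_commute)
    then show ?thesis using y0 by (auto intro!: derivative_eq_intros simp: power2_eq_square)
  qed
  have d: "((\<lambda>t. ln (t\<^sup>2) / 2 + ln (m t)) has_real_derivative 1 / y + dm y / m y) (at y)"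
    by (rule DERIV_add[OF d1 dlnm]) (use y in simp)
  show ?thesis
  proof (rule has_field_derivative_transform_within_open[OF d, where S="{t. 2 < \<bar>t\<bar>}"])
    show "open {t::real. 2 < \<bar>t\<bar>}" by (intro open_Collect_less continuous_intros)
    show "y \<in> {t. 2 < \<bar>t\<bar>}" using y by simp
    show "ln (x\<^sup>2) / 2 + ln (m x) = ln (LL (x\<^sup>2))" if "x \<in> {t. 2 < \<bar>t\<bar>}" for x
      using LL_sq[of x] that by simp
  qed
qed

lemma ev_big: "eventually (\<lambda>y::real. \<bar>y\<bar> \<ge> 3) at_infinity"
  unfolding eventually_at_infinity by (rule exI[of _ 3]) simp

lemma lim_abs: "((\<lambda>y. \<bar>1 + y * dm y / m y\<bar>) \<longlongrightarrow> 0) at_infinity"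
proof -
  have "((\<lambda>y. 1 + y * dm y / m y) \<longlongrightarrow> 1 + -1) at_infinity" by (intro tendsto_add tendsto_const lim)
  then have "((\<lambda>y. \<bar>1 + y * dm y / m y\<bar>) \<longlongrightarrow> \<bar>1 + -1\<bar>) at_infinity" by (rule tendsto_rabs)
  then show ?thesis by simp
qed

lemma main_abstract:
  "\<exists>L :: real \<Rightarrow> real.
           slowly_varying L \<and>
           (\<forall>\<^sub>F x in at_top. L differentiable at x) \<and>
           m \<sim>[at_infinity] (\<lambda>y. L (y\<^sup>2) / \<bar>y\<bar>) \<and>
           (\<forall>\<^sub>F y in at_infinity.
              deriv (\<lambda>t. ln (m t)) y = - 1 / y + deriv (\<lambda>t. ln (L (t\<^sup>2))) y) \<and>
           (\<lambda>y. deriv (\<lambda>t. ln (L (t\<^sup>2))) y) \<in> o[at_infinity](\<lambda>y. 1 / \<bar>y\<bar>) \<and>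
           (\<lambda>y. \<bar>deriv (\<lambda>t. ln (m t)) y\<bar>) \<sim>[at_infinity] (\<lambda>y. 1 / \<bar>y\<bar>)"
proof (intro exI[of _ LL] conjI)
  show "slowly_varying LL" by (rule slowly)
  show "\<forall>\<^sub>F x in at_top. LL differentiable at x" by (rule LL_diff)
  have dm1: "deriv (\<lambda>t. ln (m t)) y = dm y / m y" if "\<bar>y\<bar> \<ge> 3" for y
    using dlnm[of y] that by (intro DERIV_imp_deriv) simp
  have dL1: "deriv (\<lambda>t. ln (LL (t\<^sup>2))) y = 1 / y + dm y / m y" if "\<bar>y\<bar> \<ge> 3" for y
    using dlnL[of y] that by (intro DERIV_imp_deriv) simp
  show "m \<sim>[at_infinity] (\<lambda>y. LL (y\<^sup>2) / \<bar>y\<bar>)"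
  proof (rule asymp_equiv_refl_ev)
    show "\<forall>\<^sub>F y in at_infinity. m y = LL (y\<^sup>2) / \<bar>y\<bar>"
      using ev_big
    proof eventually_elim
      case (elim y)
      have mt: "m \<bar>y\<bar> = m y" using even[of y] by (cases "y \<ge> 0") auto
      show ?case unfolding LL_def using mt elim by simp
    qed
  qed
  show "\<forall>\<^sub>F y in at_infinity. deriv (\<lambda>t. ln (m t)) y = - 1 / y + deriv (\<lambda>t. ln (LL (t\<^sup>2))) y"
    using ev_big by eventually_elim (simp add: dm1 dL1)
  show "(\<lambda>y. deriv (\<lambda>t. ln (LL (t\<^sup>2))) y) \<in> o[at_infinity](\<lambda>y. 1 / \<bar>y\<bar>)"
  proof (rule smalloI_tendsto)
    have "((\<lambda>y. \<bar>deriv (\<lambda>t. ln (LL (t\<^sup>2))) y / (1 / \<bar>y\<bar>)\<bar>) \<longlongrightarrow> 0) at_infinity"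
    proof (rule Lim_transform_eventually[OF lim_abs])
      show "\<forall>\<^sub>F y in at_infinity. \<bar>1 + y * dm y / m y\<bar> = \<bar>deriv (\<lambda>t. ln (LL (t\<^sup>2))) y / (1 / \<bar>y\<bar>)\<bar>"
        using ev_big
      proof eventually_elim
        case (elim y)
        have y0: "y \<noteq> 0" using elim by auto
        have "deriv (\<lambda>t. ln (LL (t\<^sup>2))) y / (1 / \<bar>y\<bar>) = (1 / y + dm y / m y) * \<bar>y\<bar>"
          using dL1[OF elim] by simp
        also have "\<bar>\<dots>\<bar> = \<bar>(1 / y + dm y / m y) * y\<bar>" by (simp add: abs_mult)
        also have "(1 / y + dm y / m y) * y = 1 + y * dm y / m y" using y0 by (simp add: field_simps)
        finally show ?case by simp
      qed
    qed
    then show "((\<lambda>y. deriv (\<lambda>t. ln (LL (t\<^sup>2))) y / (1 / \<bar>y\<bar>)) \<longlongrightarrow> 0) at_infinity"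
      by (simp only: tendsto_rabs_zero_iff)
    show "\<forall>\<^sub>F y in at_infinity. 1 / \<bar>y\<bar> \<noteq> (0::real)"
      using ev_big by eventually_elim auto
  qed
  show "(\<lambda>y. \<bar>deriv (\<lambda>t. ln (m t)) y\<bar>) \<sim>[at_infinity] (\<lambda>y. 1 / \<bar>y\<bar>)"
  proof (rule asymp_equivI')
    have "((\<lambda>y. \<bar>y * dm y / m y\<bar>) \<longlongrightarrow> \<bar>-1\<bar>) at_infinity" by (rule tendsto_rabs[OF lim])
    then have l: "((\<lambda>y. \<bar>y * dm y / m y\<bar>) \<longlongrightarrow> 1) at_infinity" by simp
    show "((\<lambda>y. \<bar>deriv (\<lambda>t. ln (m t)) y\<bar> / (1 / \<bar>y\<bar>)) \<longlongrightarrow> 1) at_infinity"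
    proof (rule Lim_transform_eventually[OF l])
      show "\<forall>\<^sub>F y in at_infinity. \<bar>y * dm y / m y\<bar> = \<bar>deriv (\<lambda>t. ln (m t)) y\<bar> / (1 / \<bar>y\<bar>)"
        using ev_big
      proof eventually_elim
        case (elim y)
        show ?case using dm1[OF elim] by (simp add: abs_mult abs_divide mult_ac)
      qed
    qed
  qed
qed

end


theorem theorem1:
  fixes p :: "real \<Rightarrow> real"
  assumes "p = hths_gamma_density \<or> p = hths_plus_gamma_density"
  defines "m \<equiv> marginal_density (scale_mixture_prior p)"
  shows "\<exists>L :: real \<Rightarrow> real.
           slowly_varying L \<and>
           (\<forall>\<^sub>F x in at_top. L differentiable at x) \<and>
           m \<sim>[at_infinity] (\<lambda>y. L (y\<^sup>2) / \<bar>y\<bar>) \<and>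
           (\<forall>\<^sub>F y in at_infinity.
              deriv (\<lambda>t. ln (m t)) y = - 1 / y + deriv (\<lambda>t. ln (L (t\<^sup>2))) y) \<and>
           (\<lambda>y. deriv (\<lambda>t. ln (L (t\<^sup>2))) y) \<in> o[at_infinity](\<lambda>y. 1 / \<bar>y\<bar>) \<and>
           (\<lambda>y. \<bar>deriv (\<lambda>t. ln (m t)) y\<bar>) \<sim>[at_infinity] (\<lambda>y. 1 / \<bar>y\<bar>)"
proof -
  obtain c b where cb: "c > 0" "b > 0" "p = pd c b"
  proof (cases "p = hths_gamma_density")
    case True
    have "p = pd 1 pi" unfolding True by (simp add: fun_eq_iff hths_gamma_density_def pd_def)
    then show ?thesis using that[of 1 pi] by simp
  next
    case False
    then have "p = hths_plus_gamma_density" using assms(1) by simp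
    then have "p = pd 2 (2 * pi)" by (simp add: fun_eq_iff hths_plus_gamma_density_def pd_def power_mult_distrib)
    then show ?thesis using that[of 2 "2 * pi"] by simp
  qed
  have meq: "m = Mf c b" unfolding m_def cb(3) using marg[OF cb(1,2)] by (simp add: fun_eq_iff)
  show ?thesis unfolding meq
    by (rule main_abstract[OF Mf_even[OF cb(1,2)] Mf_pos[OF cb(1,2)] Mf_deriv[OF cb(1,2)] score_lim[OF cb(1,2)]])
qed


end
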